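(* Let $n\ge3$, $\ell\in\{1,\dots,n-2\}$, and let $K^\pm_\ell$ be as defined below. Then $$(K^\pm_\ell)^2=\big(\Gamma_{[\ell+2]}-\Gamma_{[\ell+1]}\pm\Gamma_{\{\ell+2\}}\pm\tfrac12\big)\big(\Gamma_{[\ell+2]}+\Gamma_{[\ell+1]}\pm\Gamma_{\{\ell+2\}}\mp\tfrac12\big)\big(\Gamma_{[\ell]}-\Gamma_{[\ell+1]}\pm\Gamma_{\{\ell+1\}}\pm\tfrac12\big)\big(\Gamma_{[\ell]}+\Gamma_{[\ell+1]}\pm\Gamma_{\{\ell+1\}}\mp\tfrac12\big),$$ with the upper signs taken throughout for $K^+_\ell$ and the lower signs throughout for $K^-_\ell$.
   Context: Fix $n\ge1$ and real parameters $\mu_1,\dots,\mu_n>0$; write $[\ell]=\{1,\dots,\ell\}$. For $i\in[n]$, $r_i$ is the reflection $(r_if)(x)=f(x_1,\dots,-x_i,\dots,x_n)$ and $T_i=\partial_{x_i}+\frac{\mu_i}{x_i}(1-r_i)$. $\mathcal{C}\ell_n$ is generated by $e_1,\dots,e_n$ with $e_ie_j+e_je_i=-2\delta_{ij}$, $V$ is a fixed left $\mathcal{C}\ell_n$-module, and operators act on $\mathcal{P}(\mathbb{R}^n)\otimes V$ with $x_i,T_i,r_i$ acting on the polynomial factor and $e_i$ on $V$. For $A\subseteq[n]$: $\underline{D}_A=\sum_{i\in A}e_iT_i$, $\underline{x}_A=\sum_{i\in A}e_ix_i$, $\underline{S}_A=\frac12([\underline{x}_A,\underline{D}_A]-1)$,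 $\Gamma_A=\underline{S}_A\prod_{i\in A}r_i$ (empty sums $0$, empty products $1$); note $\Gamma_{\{k\}}=\mu_k$. For $\ell\in\{1,\dots,n-2\}$: $K^\pm_\ell=(\Gamma_{\{\ell+1,\ell+2\}}\pm\Gamma_{[\ell+2]\setminus\{\ell+1\}})(\Gamma_{[\ell+1]}\mp\frac12)-(\Gamma_{\{\ell+2\}}\pm\Gamma_{[\ell+2]})(\Gamma_{[\ell]}\pm\Gamma_{\{\ell+1\}})$. *)

theory Defs
  imports "HOL-Analysis.Analysis"
begin

text \<open>Points of R^n are functions nat => real; only coordinates 1..n matter.
  Elements of P(R^n) (x) V are V-valued polynomial functions.\<close>

type_synonym 'v fn = "(nat \<Rightarrow> real) \<Rightarrow> 'v"
type_synonym 'v oper = "'v fn \<Rightarrow> 'v fn"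

inductive_set polyfun :: "nat \<Rightarrow> (real fn) set" for n :: nat where
  pconst: "(\<lambda>x. c) \<in> polyfun n"
| pvar: "i \<in> {1..n} \<Longrightarrow> (\<lambda>x. x i) \<in> polyfun n"
| padd: "p \<in> polyfun n \<Longrightarrow> q \<in> polyfun n \<Longrightarrow> (\<lambda>x. p x + q x) \<in> polyfun n"
| pmul: "p \<in> polyfun n \<Longrightarrow> q \<in> polyfun n \<Longrightarrow> (\<lambda>x. p x * q x) \<in> polyfun n"

text \<open>P(R^n) tensor V: finite sums of p(x) v.\<close>
inductive_set polyV :: "nat \<Rightarrow> ('v::real_vector) fn set" for n :: nat where
  vzero: "(\<lambda>x. 0) \<in> polyV n"
| vsimple: "p \<in> polyfun n \<Longrightarrow> (\<lambda>x. p x *\<^sub>R v) \<in> polyV n"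
| vadd: "f \<in> polyV n \<Longrightarrow> g \<in> polyV n \<Longrightarrow> (\<lambda>x. f x + g x) \<in> polyV n"

definition clifford_module :: "nat \<Rightarrow> (nat \<Rightarrow> 'v::real_vector \<Rightarrow> 'v) \<Rightarrow> bool" where
  "clifford_module n e \<longleftrightarrow> (\<forall>i\<in>{1..n}. linear (e i)) \<and>
     (\<forall>i\<in>{1..n}. \<forall>j\<in>{1..n}. \<forall>v. e i (e j v) + e j (e i v) = (if i = j then -2 else 0) *\<^sub>R v)"

definition reflset :: "nat set \<Rightarrow> ('v::real_vector) oper" where
  "reflset A f = (\<lambda>x. f (\<lambda>j. if j \<in> A then - x j else x j))"

definition pd :: "nat \<Rightarrow> ('v::real_normed_vector) oper" where
  "pd i f = (\<lambda>x. vector_derivative (\<lambda>t. f (x(i := t))) (at (x i)))"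

text \<open>Dunkl operator T_i = d_i + mu_i/x_i (1 - r_i); on the hyperplane x_i = 0 the
  divided difference (f(x) - f(r_i x))/x_i is given its (polynomial) value 2 d_i f(x).\<close>
definition dunkl :: "(nat \<Rightarrow> real) \<Rightarrow> nat \<Rightarrow> ('v::real_normed_vector) oper" where
  "dunkl mu i f = (\<lambda>x. pd i f x + mu i *\<^sub>R
      (if x i = 0 then 2 *\<^sub>R pd i f x else (1 / x i) *\<^sub>R (f x - f (x(i := - x i)))))"

definition Dirac :: "(nat \<Rightarrow> real) \<Rightarrow> (nat \<Rightarrow> 'v \<Rightarrow> 'v) \<Rightarrow> nat set \<Rightarrow> ('v::real_normed_vector) oper" where
  "Dirac mu e A f = (\<lambda>x. \<Sum>i\<in>A. e i (dunkl mu i f x))"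

definition Xop :: "(nat \<Rightarrow> 'v \<Rightarrow> 'v) \<Rightarrow> nat set \<Rightarrow> ('v::real_normed_vector) oper" where
  "Xop e A f = (\<lambda>x. \<Sum>i\<in>A. x i *\<^sub>R e i (f x))"

definition Sop :: "(nat \<Rightarrow> real) \<Rightarrow> (nat \<Rightarrow> 'v \<Rightarrow> 'v) \<Rightarrow> nat set \<Rightarrow> ('v::real_normed_vector) oper" where
  "Sop mu e A f = (\<lambda>x. (1/2) *\<^sub>R (Xop e A (Dirac mu e A f) x - Dirac mu e A (Xop e A f) x - f x))"

definition Gam :: "(nat \<Rightarrow> real) \<Rightarrow> (nat \<Rightarrow> 'v \<Rightarrow> 'v) \<Rightarrow> nat set \<Rightarrow> ('v::real_normed_vector) oper" where
  "Gam mu e A f = Sop mu e A (reflset A f)"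

definition op_plus :: "('v::real_vector) oper \<Rightarrow> 'v oper \<Rightarrow> 'v oper" where
  "op_plus F G = (\<lambda>f x. F f x + G f x)"

definition op_minus :: "('v::real_vector) oper \<Rightarrow> 'v oper \<Rightarrow> 'v oper" where
  "op_minus F G = (\<lambda>f x. F f x - G f x)"

definition op_smul :: "real \<Rightarrow> ('v::real_vector) oper \<Rightarrow> 'v oper" where
  "op_smul c F = (\<lambda>f x. c *\<^sub>R F f x)"

definition op_const :: "real \<Rightarrow> ('v::real_vector) oper" where
  "op_const c = (\<lambda>f x. c *\<^sub>R f x)"

text \<open>K^s_l for s = 1 (K^+) and s = -1 (K^-); composition of operators is \<circ>.\<close>
definition Kop :: "(nat \<Rightarrow> real) \<Rightarrow> (nat \<Rightarrow> 'v \<Rightarrow> 'v) \<Rightarrow> real \<Rightarrow> nat \<Rightarrow> ('v::real_normed_vector) oper" where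
  "Kop mu e s l = op_minus
     (op_plus (Gam mu e {l+1, l+2}) (op_smul s (Gam mu e ({1..l+2} - {l+1})))
        \<circ> op_plus (Gam mu e {1..l+1}) (op_const (- s / 2)))
     (op_plus (Gam mu e {l+2}) (op_smul s (Gam mu e {1..l+2}))
        \<circ> op_plus (Gam mu e {1..l}) (op_smul s (Gam mu e {l+1})))"

end

theory Submission
  imports Defs
begin


definition PA :: "('v::real_normed_vector) fn set" where "PA = (\<Union>m. polyV m)"

definition sig :: "nat set \<Rightarrow> (nat \<Rightarrow> real) \<Rightarrow> (nat \<Rightarrow> real)" where
  "sig A x = (\<lambda>j. if j \<in> A then - x j else x j)"

lemma reflset_sig: "reflset A f = (\<lambda>x. f (sig A x))"
  by (simp add: reflset_def sig_def)

lemma sig_single: "sig {i} x = x(i := - x i)"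
  by (auto simp: sig_def)

lemma polyfun_mono: "p \<in> polyfun m \<Longrightarrow> m \<le> k \<Longrightarrow> p \<in> polyfun k"
  by (induction p rule: polyfun.induct) (auto intro: polyfun.intros)

lemma polyV_mono: "f \<in> polyV m \<Longrightarrow> m \<le> k \<Longrightarrow> f \<in> polyV k"
  by (induction f rule: polyV.induct) (auto intro: polyV.intros polyfun_mono)

lemma PA_I: "f \<in> polyV m \<Longrightarrow> f \<in> PA" by (auto simp: PA_def)

lemma PA_E: "f \<in> PA \<Longrightarrow> (\<And>m. f \<in> polyV m \<Longrightarrow> P) \<Longrightarrow> P" by (auto simp: PA_def)

lemma PA_zero: "(\<lambda>x. 0) \<in> PA"
  by (rule PA_I[OF polyV.vzero])

lemma PA_add: "f \<in> PA \<Longrightarrow> g \<in> PA \<Longrightarrow> (\<lambda>x. f x + g x) \<in> PA"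
proof -
  assume "f \<in> PA" "g \<in> PA"
  then obtain m k where "f \<in> polyV m" "g \<in> polyV k" by (auto simp: PA_def)
  then have "f \<in> polyV (max m k)" "g \<in> polyV (max m k)" by (auto intro: polyV_mono)
  then show ?thesis by (auto intro: PA_I polyV.vadd)
qed

lemma polyV_scale: "f \<in> polyV m \<Longrightarrow> (\<lambda>x. c *\<^sub>R f x) \<in> polyV m"
proof (induction f rule: polyV.induct)
  case vzero then show ?case by (simp add: polyV.vzero)
next
  case (vsimple p v)
  have "(\<lambda>x. c * p x) \<in> polyfun m" by (rule polyfun.pmul[OF polyfun.pconst vsimple])
  then have "(\<lambda>x. (c * p x) *\<^sub>R v) \<in> polyV m" by (rule polyV.vsimple)
  then show ?case by simp
next
  case (vadd f g)
  have "(\<lambda>x. c *\<^sub>R f x + c *\<^sub>R g x) \<in> polyV m" by (rule polyV.vadd[OF vadd.IH])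
  then show ?case by (simp add: scaleR_right_distrib)
qed

lemma PA_scale: "f \<in> PA \<Longrightarrow> (\<lambda>x. c *\<^sub>R f x) \<in> PA"
  by (auto simp: PA_def intro: polyV_scale)

lemma PA_minus: "f \<in> PA \<Longrightarrow> (\<lambda>x. - f x) \<in> PA"
  using PA_scale[of f "-1"] by simp

lemma PA_diff: "f \<in> PA \<Longrightarrow> g \<in> PA \<Longrightarrow> (\<lambda>x. f x - g x) \<in> PA"
  using PA_add[of f "\<lambda>x. - g x"] PA_minus[of g] by simp

lemma polyV_lin: "f \<in> polyV m \<Longrightarrow> linear L \<Longrightarrow> (\<lambda>x. L (f x)) \<in> polyV m"
proof (induction f rule: polyV.induct)
  case vzero then show ?case by (simp add: linear_0 polyV.vzero)
next
  case (vsimple p v)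
  then show ?case by (simp add: linear_scale polyV.vsimple)
next
  case (vadd f g)
  then show ?case by (simp add: linear_add polyV.vadd)
qed

lemma PA_lin: "f \<in> PA \<Longrightarrow> linear L \<Longrightarrow> (\<lambda>x. L (f x)) \<in> PA"
  by (auto simp: PA_def intro: polyV_lin)

lemma polyV_mulx: "f \<in> polyV m \<Longrightarrow> i \<in> {1..m} \<Longrightarrow> (\<lambda>x. x i *\<^sub>R f x) \<in> polyV m"
proof (induction f rule: polyV.induct)
  case vzero then show ?case by (simp add: polyV.vzero)
next
  case (vsimple p v)
  have "(\<lambda>x. x i * p x) \<in> polyfun m" by (rule polyfun.pmul[OF polyfun.pvar[OF vsimple(2)] vsimple(1)])
  then show ?case using polyV.vsimple by fastforce
next
  case (vadd f g)
  then have "(\<lambda>x. x i *\<^sub>R f x + x i *\<^sub>R g x) \<in> polyV m" by (simp add: polyV.vadd)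
  then show ?case by (simp add: scaleR_right_distrib)
qed

lemma PA_mulx: "f \<in> PA \<Longrightarrow> 1 \<le> i \<Longrightarrow> (\<lambda>x. x i *\<^sub>R f x) \<in> PA"
proof -
  assume "f \<in> PA" "1 \<le> i"
  then obtain m where "f \<in> polyV m" by (auto simp: PA_def)
  then have "f \<in> polyV (max m i)" by (auto intro: polyV_mono)
  moreover have "i \<in> {1..max m i}" using \<open>1 \<le> i\<close> by auto
  ultimately show ?thesis by (rule PA_I[OF polyV_mulx])
qed

lemma polyfun_sig: "p \<in> polyfun m \<Longrightarrow> (\<lambda>x. p (sig A x)) \<in> polyfun m"
proof (induction p rule: polyfun.induct)
  case (pconst c) then show ?case by (rule polyfun.pconst)
next
  case (pvar i)
  show ?case
  proof (cases "i \<in> A")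
    case True
    have "(\<lambda>x. (-1) * x i) \<in> polyfun m" by (rule polyfun.pmul[OF polyfun.pconst polyfun.pvar[OF pvar]])
    then show ?thesis using True by (simp add: sig_def)
  next
    case False then show ?thesis using pvar by (simp add: sig_def polyfun.pvar)
  qed
next
  case (padd p q) then show ?case by (simp add: polyfun.padd)
next
  case (pmul p q) then show ?case by (simp add: polyfun.pmul)
qed

lemma polyV_sig: "f \<in> polyV m \<Longrightarrow> (\<lambda>x. f (sig A x)) \<in> polyV m"
  by (induction f rule: polyV.induct) (auto intro: polyV.intros polyfun_sig)

lemma PA_refl: "f \<in> PA \<Longrightarrow> reflset A f \<in> PA"
  by (auto simp: PA_def reflset_sig intro: polyV_sig)

lemma polyfun_upd: "p \<in> polyfun m \<Longrightarrow> (\<lambda>x. p (x(i := - x i))) \<in> polyfun m"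
  using polyfun_sig[of p m "{i}"] by (simp add: sig_single)

lemma pf_deriv: "p \<in> polyfun m \<Longrightarrow> \<exists>q\<in>polyfun m. \<forall>x. ((\<lambda>t. p (x(i:=t))) has_real_derivative q x) (at (x i))"
proof (induction p rule: polyfun.induct)
  case (pconst c)
  show ?case by (rule bexI[of _ "\<lambda>x. 0"]) (auto intro: polyfun.pconst)
next
  case (pvar j)
  show ?case
  proof (cases "j = i")
    case True
    show ?thesis by (rule bexI[of _ "\<lambda>x. 1"]) (auto simp: True intro: polyfun.pconst)
  next
    case False
    show ?thesis by (rule bexI[of _ "\<lambda>x. 0"]) (auto simp: False intro: polyfun.pconst)
  qed
next
  case (padd p q)
  from padd.IH obtain p' q' where "p' \<in> polyfun m" "q' \<in> polyfun m"
    and dp: "\<forall>x. ((\<lambda>t. p (x(i:=t))) has_real_derivative p' x) (at (x i))"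
    and dq: "\<forall>x. ((\<lambda>t. q (x(i:=t))) has_real_derivative q' x) (at (x i))" by blast
  have "\<forall>x. ((\<lambda>t. p (x(i:=t)) + q (x(i:=t))) has_real_derivative (p' x + q' x)) (at (x i))"
    using DERIV_add dp dq by blast
  moreover have "(\<lambda>x. p' x + q' x) \<in> polyfun m" using \<open>p' \<in> _\<close> \<open>q' \<in> _\<close> by (rule polyfun.padd)
  ultimately show ?case by (intro bexI[where x="\<lambda>x. p' x + q' x"])
next
  case (pmul p q)
  from pmul.IH obtain p' q' where "p' \<in> polyfun m" "q' \<in> polyfun m"
    and dp: "\<forall>x. ((\<lambda>t. p (x(i:=t))) has_real_derivative p' x) (at (x i))"
    and dq: "\<forall>x. ((\<lambda>t. q (x(i:=t))) has_real_derivative q' x) (at (x i))" by blast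
  have "\<forall>x. ((\<lambda>t. p (x(i:=t)) * q (x(i:=t))) has_real_derivative (p' x * q x + p x * q' x)) (at (x i))"
  proof
    fix x
    show "((\<lambda>t. p (x(i:=t)) * q (x(i:=t))) has_real_derivative (p' x * q x + p x * q' x)) (at (x i))"
      using DERIV_mult[OF dp[rule_format, of x] dq[rule_format, of x]] by (simp add: mult.commute)
  qed
  moreover have "(\<lambda>x. p' x * q x + p x * q' x) \<in> polyfun m"
    by (intro polyfun.padd polyfun.pmul \<open>p' \<in> _\<close> \<open>q' \<in> _\<close> pmul.hyps)
  ultimately show ?case by (intro bexI[where x="\<lambda>x. p' x * q x + p x * q' x"])
qed

lemma pv_deriv: "f \<in> polyV m \<Longrightarrow> \<exists>g\<in>polyV m. \<forall>x. ((\<lambda>t. f (x(i:=t))) has_vector_derivative g x) (at (x i))"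
proof (induction f rule: polyV.induct)
  case vzero
  show ?case by (rule bexI[of _ "\<lambda>x. 0"]) (auto intro: polyV.vzero)
next
  case (vsimple p v)
  from pf_deriv[OF vsimple] obtain q where q: "q \<in> polyfun m"
    "\<forall>x. ((\<lambda>t. p (x(i:=t))) has_real_derivative q x) (at (x i))" by blast
  have "\<forall>x. ((\<lambda>t. p (x(i:=t)) *\<^sub>R v) has_vector_derivative q x *\<^sub>R v) (at (x i))"
  proof
    fix x
    show "((\<lambda>t. p (x(i:=t)) *\<^sub>R v) has_vector_derivative q x *\<^sub>R v) (at (x i))"
      using has_vector_derivative_scaleR[OF q(2)[rule_format, of x] has_vector_derivative_const[of v]] by simp
  qed
  moreover have "(\<lambda>x. q x *\<^sub>R v) \<in> polyV m" using q(1) by (rule polyV.vsimple)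
  ultimately show ?case by (intro bexI[where x="\<lambda>x. q x *\<^sub>R v"])
next
  case (vadd f g)
  from vadd.IH obtain f' g' where "f' \<in> polyV m" "g' \<in> polyV m"
    and df: "\<forall>x. ((\<lambda>t. f (x(i:=t))) has_vector_derivative f' x) (at (x i))"
    and dg: "\<forall>x. ((\<lambda>t. g (x(i:=t))) has_vector_derivative g' x) (at (x i))" by blast
  have "\<forall>x. ((\<lambda>t. f (x(i:=t)) + g (x(i:=t))) has_vector_derivative (f' x + g' x)) (at (x i))"
    using has_vector_derivative_add df dg by blast
  moreover have "(\<lambda>x. f' x + g' x) \<in> polyV m" using \<open>f' \<in> _\<close> \<open>g' \<in> _\<close> by (rule polyV.vadd)
  ultimately show ?case by (intro bexI[where x="\<lambda>x. f' x + g' x"])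
qed

lemma pd_unique:
  assumes "\<forall>x. ((\<lambda>t. f (x(i:=t))) has_vector_derivative g x) (at (x i))"
  shows "pd i f = g"
  using assms by (auto simp: pd_def fun_eq_iff intro: vector_derivative_at)

lemma pd_polyV: "f \<in> polyV m \<Longrightarrow> pd i f \<in> polyV m"
  using pv_deriv[of f m i] pd_unique by metis

lemma pd_hd: "f \<in> polyV m \<Longrightarrow> ((\<lambda>t. f (x(i:=t))) has_vector_derivative pd i f x) (at (x i))"
  using pv_deriv[of f m i] pd_unique by metis

lemma pd_hd': "f \<in> polyV m \<Longrightarrow> ((\<lambda>t. f (x(i:=t))) has_vector_derivative pd i f (x(i:=s))) (at s)"
  using pd_hd[where f=f and m=m and i=i and x="x(i:=s)"] by simp

lemma pd_pf: "p \<in> polyfun m \<Longrightarrow> pd i p \<in> polyfun m \<and> (\<forall>x. ((\<lambda>t. p (x(i:=t))) has_real_derivative pd i p x) (at (x i)))"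
proof -
  assume p: "p \<in> polyfun m"
  from pf_deriv[OF p] obtain q where q: "q \<in> polyfun m" "\<forall>x. ((\<lambda>t. p (x(i:=t))) has_real_derivative q x) (at (x i))" by blast
  have "pd i p = q" by (rule pd_unique) (use q(2) in \<open>simp add: has_real_derivative_iff_has_vector_derivative\<close>)
  then show ?thesis using q by simp
qed


definition PF :: "((nat \<Rightarrow> real) \<Rightarrow> real) set" where "PF = (\<Union>m. polyfun m)"

lemma PF_I: "p \<in> polyfun m \<Longrightarrow> p \<in> PF" by (auto simp: PF_def)

lemma PF_common: "p \<in> PF \<Longrightarrow> q \<in> PF \<Longrightarrow> (\<And>m. p \<in> polyfun m \<Longrightarrow> q \<in> polyfun m \<Longrightarrow> P) \<Longrightarrow> P"
proof -
  assume "p \<in> PF" "q \<in> PF" and H: "\<And>m. p \<in> polyfun m \<Longrightarrow> q \<in> polyfun m \<Longrightarrow> P"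
  then obtain a b where "p \<in> polyfun a" "q \<in> polyfun b" by (auto simp: PF_def)
  then show P by (meson H max.cobounded1 max.cobounded2 polyfun_mono)
qed

lemma PF_mul: "p \<in> PF \<Longrightarrow> q \<in> PF \<Longrightarrow> (\<lambda>x. p x * q x) \<in> PF"
  by (erule PF_common, assumption) (auto intro: PF_I polyfun.pmul)

lemma PF_add: "p \<in> PF \<Longrightarrow> q \<in> PF \<Longrightarrow> (\<lambda>x. p x + q x) \<in> PF"
  by (erule PF_common, assumption) (auto intro: PF_I polyfun.padd)

lemma PA_common: "f \<in> PA \<Longrightarrow> g \<in> PA \<Longrightarrow> (\<And>m. f \<in> polyV m \<Longrightarrow> g \<in> polyV m \<Longrightarrow> P) \<Longrightarrow> P"
proof -
  assume "f \<in> PA" "g \<in> PA" and H: "\<And>m. f \<in> polyV m \<Longrightarrow> g \<in> polyV m \<Longrightarrow> P"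
  then obtain a b where "f \<in> polyV a" "g \<in> polyV b" by (auto simp: PA_def)
  then show P by (meson H max.cobounded1 max.cobounded2 polyV_mono)
qed


lemma pd_unique_real:
  assumes "\<forall>x. ((\<lambda>t. p (x(i:=t))) has_real_derivative g x) (at (x i))"
  shows "pd i p = g"
  using assms by (intro pd_unique) (simp add: has_real_derivative_iff_has_vector_derivative)

lemma pd_hd_real: "p \<in> PF \<Longrightarrow> ((\<lambda>t. p (x(i:=t))) has_real_derivative pd i p x) (at (x i))"
  unfolding PF_def using pd_pf by blast

lemma pdf_PF: "p \<in> PF \<Longrightarrow> pd i p \<in> PF"
  unfolding PF_def using pd_pf by blast

lemma pdf_polyfun: "p \<in> polyfun m \<Longrightarrow> pd i p \<in> polyfun m"
  using pd_pf by blast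

lemma pdf_const: "pd i (\<lambda>x. c) = (\<lambda>x. 0::real)"
  by (rule pd_unique_real) simp

lemma pdf_var: "pd i (\<lambda>x. x j) = (\<lambda>x. if i = j then 1 else 0::real)"
proof (rule pd_unique_real, rule allI)
  fix x :: "nat \<Rightarrow> real"
  show "((\<lambda>t. (x(i:=t)) j) has_real_derivative (if i = j then 1 else 0)) (at (x i))"
    by (cases "i = j") auto
qed

lemma pdf_add: "p \<in> PF \<Longrightarrow> q \<in> PF \<Longrightarrow> pd i (\<lambda>x. p x + q x) = (\<lambda>x. pd i p x + pd i q x)"
  by (rule pd_unique_real) (auto intro!: DERIV_add pd_hd_real)

lemma pdf_mul: "p \<in> PF \<Longrightarrow> q \<in> PF \<Longrightarrow> pd i (\<lambda>x. p x * q x) = (\<lambda>x. pd i p x * q x + p x * pd i q x)"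
proof (rule pd_unique_real, rule allI)
  fix x :: "nat \<Rightarrow> real"
  assume "p \<in> PF" "q \<in> PF"
  show "((\<lambda>t. p (x(i:=t)) * q (x(i:=t))) has_real_derivative (pd i p x * q x + p x * pd i q x)) (at (x i))"
    using DERIV_mult[OF pd_hd_real[OF \<open>p \<in> _\<close>, of x i] pd_hd_real[OF \<open>q \<in> _\<close>, of x i]] by (simp add: mult.commute)
qed

lemma pdf_comm: "p \<in> polyfun m \<Longrightarrow> pd i (pd j p) = pd j (pd i p)"
proof (induction p rule: polyfun.induct)
  case (pconst c) then show ?case by (simp add: pdf_const)
next
  case (pvar k) then show ?case by (simp add: pdf_var pdf_const)
next
  case (padd p q)
  have pp: "p \<in> PF" "q \<in> PF" using padd.hyps by (auto intro: PF_I)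
  have "pd i (pd j (\<lambda>x. p x + q x)) = (\<lambda>x. pd i (pd j p) x + pd i (pd j q) x)"
    using pp by (simp add: pdf_add pdf_PF)
  moreover have "pd j (pd i (\<lambda>x. p x + q x)) = (\<lambda>x. pd j (pd i p) x + pd j (pd i q) x)"
    using pp by (simp add: pdf_add pdf_PF)
  ultimately show ?case using padd.IH by simp
next
  case (pmul p q)
  have pp: "p \<in> PF" "q \<in> PF" using pmul.hyps by (auto intro: PF_I)
  have "pd i (pd j (\<lambda>x. p x * q x)) = (\<lambda>x. (pd i (pd j p) x * q x + pd j p x * pd i q x) + (pd i p x * pd j q x + p x * pd i (pd j q) x))"
    using pp by (simp add: pdf_mul pdf_add pdf_PF PF_mul)
  moreover have "pd j (pd i (\<lambda>x. p x * q x)) = (\<lambda>x. (pd j (pd i p) x * q x + pd i p x * pd j q x) + (pd j p x * pd i q x + p x * pd j (pd i q) x))"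
    using pp by (simp add: pdf_mul pdf_add pdf_PF PF_mul)
  ultimately show ?case using pmul.IH by (simp add: algebra_simps)
qed

lemma pd_PA: "f \<in> PA \<Longrightarrow> pd i f \<in> PA"
  by (auto simp: PA_def intro: pd_polyV)

lemma pd_hdA: "f \<in> PA \<Longrightarrow> ((\<lambda>t. f (x(i:=t))) has_vector_derivative pd i f x) (at (x i))"
  by (auto simp: PA_def intro: pd_hd)

lemma pd_hdA': "f \<in> PA \<Longrightarrow> ((\<lambda>t. f (x(i:=t))) has_vector_derivative pd i f (x(i:=s))) (at s)"
  by (auto simp: PA_def intro: pd_hd')

lemma pd_add: "f \<in> PA \<Longrightarrow> g \<in> PA \<Longrightarrow> pd i (\<lambda>x. f x + g x) = (\<lambda>x. pd i f x + pd i g x)"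
  by (rule pd_unique) (auto intro!: has_vector_derivative_add pd_hdA)

lemma pd_zero: "pd i (\<lambda>x. 0) = (\<lambda>x. (0::'v::real_normed_vector))"
  by (rule pd_unique) simp

lemma pd_scale: "f \<in> PA \<Longrightarrow> pd i (\<lambda>x. c *\<^sub>R f x) = (\<lambda>x. c *\<^sub>R pd i f x)"
proof (rule pd_unique, rule allI)
  fix x :: "nat \<Rightarrow> real"
  assume "f \<in> PA"
  show "((\<lambda>t. c *\<^sub>R f (x(i:=t))) has_vector_derivative c *\<^sub>R pd i f x) (at (x i))"
    using has_vector_derivative_scaleR[OF DERIV_const pd_hdA[OF \<open>f \<in> _\<close>, of x i]] by simp
qed

lemma pdV: "p \<in> PF \<Longrightarrow> pd i (\<lambda>x. p x *\<^sub>R v) = (\<lambda>x. pd i p x *\<^sub>R v)"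
proof (rule pd_unique, rule allI)
  fix x :: "nat \<Rightarrow> real"
  assume "p \<in> PF"
  show "((\<lambda>t. p (x(i:=t)) *\<^sub>R v) has_vector_derivative pd i p x *\<^sub>R v) (at (x i))"
    using has_vector_derivative_scaleR[OF pd_hd_real[OF \<open>p \<in> _\<close>, of x i] has_vector_derivative_const[of v]] by simp
qed

lemma pd_mulx: "f \<in> PA \<Longrightarrow> pd i (\<lambda>x. x j *\<^sub>R f x) = (\<lambda>x. (if i = j then f x else 0) + x j *\<^sub>R pd i f x)"
proof (rule pd_unique, rule allI)
  fix x :: "nat \<Rightarrow> real"
  assume f: "f \<in> PA"
  have d1: "((\<lambda>t. (x(i:=t)) j) has_real_derivative (if i = j then 1 else 0)) (at (x i))"
    by (cases "i = j") auto
  have "((\<lambda>t. (x(i:=t)) j *\<^sub>R f (x(i:=t))) has_vector_derivative ((x(i:=x i)) j *\<^sub>R pd i f x + (if i = j then 1 else 0) *\<^sub>R f (x(i:=x i)))) (at (x i))"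
    by (rule has_vector_derivative_scaleR[OF d1 pd_hdA[OF f, of x i]])
  moreover have "(x(i:=x i)) j *\<^sub>R pd i f x + (if i = j then 1 else 0) *\<^sub>R f (x(i:=x i)) = (if i = j then f x else 0) + x j *\<^sub>R pd i f x"
    by simp
  ultimately show "((\<lambda>t. (x(i:=t)) j *\<^sub>R f (x(i:=t))) has_vector_derivative (if i = j then f x else 0) + x j *\<^sub>R pd i f x) (at (x i))"
    by metis
qed

lemma sig_upd: "sig A (x(i:=t)) = (sig A x)(i := if i \<in> A then - t else t)"
  by (auto simp: sig_def)

lemma pd_refl: "f \<in> PA \<Longrightarrow> pd i (reflset A f) = (\<lambda>x. (if i \<in> A then -1 else 1) *\<^sub>R reflset A (pd i f) x)"
proof (rule pd_unique, rule allI)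
  fix x :: "nat \<Rightarrow> real"
  assume f: "f \<in> PA"
  let ?y = "sig A x"
  show "((\<lambda>t. reflset A f (x(i:=t))) has_vector_derivative (if i \<in> A then -1 else 1) *\<^sub>R reflset A (pd i f) x) (at (x i))"
  proof (cases "i \<in> A")
    case True
    have yi: "?y i = - x i" using True by (simp add: sig_def)
    have e: "(\<lambda>t. reflset A f (x(i:=t))) = (\<lambda>s. f (?y(i:=s))) \<circ> (\<lambda>t. - t)"
      using True by (simp add: reflset_sig sig_upd o_def)
    have d1: "((\<lambda>t. - t) has_vector_derivative (-1)) (at (x i))"
      using has_vector_derivative_minus[OF has_vector_derivative_id] by simp
    have yy: "?y(i := - x i) = ?y" using yi by (metis fun_upd_triv)
    have d2: "((\<lambda>s. f (?y(i:=s))) has_vector_derivative pd i f ?y) (at (- x i))"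
      using pd_hdA'[OF f, of ?y i "- x i"] yy by simp
    show ?thesis
      using vector_diff_chain_at[OF d1 d2] True unfolding e by (simp add: reflset_sig)
  next
    case False
    have yi: "?y i = x i" using False by (simp add: sig_def)
    have e: "(\<lambda>t. reflset A f (x(i:=t))) = (\<lambda>s. f (?y(i:=s)))"
      using False by (simp add: reflset_sig sig_upd)
    have "((\<lambda>s. f (?y(i:=s))) has_vector_derivative pd i f ?y) (at (?y i))"
      by (rule pd_hdA[OF f])
    then show ?thesis
      using False yi unfolding e by (simp add: reflset_sig)
  qed
qed

lemma pd_lin: "f \<in> polyV m \<Longrightarrow> linear L \<Longrightarrow> pd i (\<lambda>x. L (f x)) = (\<lambda>x. L (pd i f x))"
proof (induction f rule: polyV.induct)
  case vzero then show ?case by (simp add: linear_0 pd_zero)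
next
  case (vsimple p v)
  from vsimple(1) have "p \<in> PF" by (rule PF_I)
  then show ?case using vsimple by (simp add: linear_scale pdV)
next
  case (vadd f g)
  have fg: "f \<in> PA" "g \<in> PA" "(\<lambda>x. L (f x)) \<in> PA" "(\<lambda>x. L (g x)) \<in> PA"
    using vadd by (auto intro: PA_I polyV_lin)
  have "pd i (\<lambda>x. L (f x + g x)) = pd i (\<lambda>x. L (f x) + L (g x))"
    using vadd by (simp add: linear_add)
  also have "\<dots> = (\<lambda>x. pd i (\<lambda>x. L (f x)) x + pd i (\<lambda>x. L (g x)) x)"
    using fg by (intro pd_add)
  also have "\<dots> = (\<lambda>x. L (pd i (\<lambda>x. f x + g x) x))"
    using vadd fg by (simp add: pd_add linear_add)
  finally show ?case .
qed

lemma pd_linA: "f \<in> PA \<Longrightarrow> linear L \<Longrightarrow> pd i (\<lambda>x. L (f x)) = (\<lambda>x. L (pd i f x))"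
  by (auto simp: PA_def intro: pd_lin)

lemma pd_comm0: "f \<in> polyV m \<Longrightarrow> pd i (pd j f) = pd j (pd i f)"
proof (induction f rule: polyV.induct)
  case vzero then show ?case by (simp add: pd_zero)
next
  case (vsimple p v)
  from vsimple(1) have "p \<in> PF" by (rule PF_I)
  then show ?case using vsimple by (simp add: pdV pdf_PF pdf_comm)
next
  case (vadd f g)
  then have "f \<in> PA" "g \<in> PA" by (auto intro: PA_I)
  then show ?case using vadd by (simp add: pd_add pd_PA)
qed

lemma pd_comm: "f \<in> PA \<Longrightarrow> pd i (pd j f) = pd j (pd i f)"
  by (auto simp: PA_def intro: pd_comm0)


lemma pf_dd: "p \<in> polyfun m \<Longrightarrow> \<exists>q\<in>polyfun m. \<forall>x. p x - p (x(i := - x i)) = x i * q x"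
proof (induction p rule: polyfun.induct)
  case (pconst c)
  show ?case by (rule bexI[where x="\<lambda>x. 0"]) (auto intro: polyfun.pconst)
next
  case (pvar j)
  show ?case
  proof (cases "j = i")
    case True
    show ?thesis by (rule bexI[where x="\<lambda>x. 2"]) (simp_all add: True polyfun.pconst)
  next
    case False
    show ?thesis by (rule bexI[where x="\<lambda>x. 0"]) (simp_all add: False polyfun.pconst)
  qed
next
  case (padd p q)
  from padd.IH obtain p' q' where "p' \<in> polyfun m" "q' \<in> polyfun m"
    and dp: "\<forall>x. p x - p (x(i := - x i)) = x i * p' x"
    and dq: "\<forall>x. q x - q (x(i := - x i)) = x i * q' x" by blast
  have "\<forall>x. (p x + q x) - (p (x(i := - x i)) + q (x(i := - x i))) = x i * (p' x + q' x)"
  proof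
    fix x
    have a: "p (x(i := - x i)) = p x - x i * p' x" using dp[rule_format, of x] by (simp add: algebra_simps)
    have b: "q (x(i := - x i)) = q x - x i * q' x" using dq[rule_format, of x] by (simp add: algebra_simps)
    show "(p x + q x) - (p (x(i := - x i)) + q (x(i := - x i))) = x i * (p' x + q' x)"
      unfolding a b by (simp add: algebra_simps)
  qed
  moreover have "(\<lambda>x. p' x + q' x) \<in> polyfun m" using \<open>p' \<in> _\<close> \<open>q' \<in> _\<close> by (rule polyfun.padd)
  ultimately show ?case by (intro bexI[where x="\<lambda>x. p' x + q' x"])
next
  case (pmul p q)
  from pmul.IH obtain p' q' where "p' \<in> polyfun m" "q' \<in> polyfun m"
    and dp: "\<forall>x. p x - p (x(i := - x i)) = x i * p' x"
    and dq: "\<forall>x. q x - q (x(i := - x i)) = x i * q' x" by blast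
  have "\<forall>x. p x * q x - p (x(i := - x i)) * q (x(i := - x i)) = x i * (p x * q' x + p' x * q (x(i := - x i)))"
  proof
    fix x
    have a: "p (x(i := - x i)) = p x - x i * p' x" using dp[rule_format, of x] by (simp add: algebra_simps)
    have b: "q (x(i := - x i)) = q x - x i * q' x" using dq[rule_format, of x] by (simp add: algebra_simps)
    show "p x * q x - p (x(i := - x i)) * q (x(i := - x i)) = x i * (p x * q' x + p' x * q (x(i := - x i)))"
      unfolding a b by (simp add: algebra_simps)
  qed
  moreover have "(\<lambda>x. p x * q' x + p' x * q (x(i := - x i))) \<in> polyfun m"
    by (intro polyfun.padd polyfun.pmul pmul.hyps \<open>p' \<in> _\<close> \<open>q' \<in> _\<close> polyfun_upd)
  ultimately show ?case by (intro bexI[where x="\<lambda>x. p x * q' x + p' x * q (x(i := - x i))"])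
qed

lemma pv_dd: "f \<in> polyV m \<Longrightarrow> \<exists>g\<in>polyV m. \<forall>x. f x - f (x(i := - x i)) = x i *\<^sub>R g x"
proof (induction f rule: polyV.induct)
  case vzero
  show ?case by (rule bexI[where x="\<lambda>x. 0"]) (auto intro: polyV.vzero)
next
  case (vsimple p v)
  from pf_dd[OF vsimple] obtain q where q: "q \<in> polyfun m" "\<forall>x. p x - p (x(i := - x i)) = x i * q x" by blast
  have "\<forall>x. p x *\<^sub>R v - p (x(i := - x i)) *\<^sub>R v = x i *\<^sub>R (q x *\<^sub>R v)"
    using q(2) by (simp add: scaleR_left_diff_distrib[symmetric])
  moreover have "(\<lambda>x. q x *\<^sub>R v) \<in> polyV m" using q(1) by (rule polyV.vsimple)
  ultimately show ?case by (intro bexI[where x="\<lambda>x. q x *\<^sub>R v"])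
next
  case (vadd f g)
  from vadd.IH obtain f' g' where "f' \<in> polyV m" "g' \<in> polyV m"
    and df: "\<forall>x. f x - f (x(i := - x i)) = x i *\<^sub>R f' x"
    and dg: "\<forall>x. g x - g (x(i := - x i)) = x i *\<^sub>R g' x" by blast
  have "\<forall>x. (f x + g x) - (f (x(i := - x i)) + g (x(i := - x i))) = x i *\<^sub>R (f' x + g' x)"
  proof
    fix x
    have a: "f (x(i := - x i)) = f x - x i *\<^sub>R f' x" using df[rule_format, of x] by (simp add: algebra_simps)
    have b: "g (x(i := - x i)) = g x - x i *\<^sub>R g' x" using dg[rule_format, of x] by (simp add: algebra_simps)
    show "(f x + g x) - (f (x(i := - x i)) + g (x(i := - x i))) = x i *\<^sub>R (f' x + g' x)"
      unfolding a b by (simp add: algebra_simps)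
  qed
  moreover have "(\<lambda>x. f' x + g' x) \<in> polyV m" using \<open>f' \<in> _\<close> \<open>g' \<in> _\<close> by (rule polyV.vadd)
  ultimately show ?case by (intro bexI[where x="\<lambda>x. f' x + g' x"])
qed



definition ddv :: "nat \<Rightarrow> ('v::real_normed_vector) oper" where
  "ddv i f = (\<lambda>x. if x i = 0 then 2 *\<^sub>R pd i f x else (1 / x i) *\<^sub>R (f x - f (x(i := - x i))))"

lemma dunkl_ddv: "dunkl mu i f = (\<lambda>x. pd i f x + mu i *\<^sub>R ddv i f x)"
  by (simp add: dunkl_def ddv_def)

lemma ddv_props: "f \<in> polyV m \<Longrightarrow> ddv i f \<in> polyV m \<and> (\<forall>x. x i *\<^sub>R ddv i f x = f x - f (x(i := - x i)))"
proof -
  assume f: "f \<in> polyV m"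
  from pv_dd[OF f, of i] obtain g where g: "g \<in> polyV m" "\<forall>x. f x - f (x(i := - x i)) = x i *\<^sub>R g x" by blast
  have "ddv i f = g"
  proof (rule ext)
    fix x :: "nat \<Rightarrow> real"
    show "ddv i f x = g x"
    proof (cases "x i = 0")
      case False
      then show ?thesis using g(2) by (simp add: ddv_def)
    next
      case True
      have e: "(\<lambda>t. f (x(i:=t)) - f (x(i := - t))) = (\<lambda>t. t *\<^sub>R g (x(i:=t)))"
      proof
        fix t
        show "f (x(i:=t)) - f (x(i := - t)) = t *\<^sub>R g (x(i:=t))"
          using g(2)[rule_format, of "x(i:=t)"] by simp
      qed
      have d1: "((\<lambda>t. f (x(i := - t))) has_vector_derivative (- pd i f x)) (at (x i))"
      proof -
        have a: "((\<lambda>t. - t) has_vector_derivative (-1)) (at (x i))"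
          using has_vector_derivative_minus[OF has_vector_derivative_id] by simp
        have b: "((\<lambda>s. f (x(i:=s))) has_vector_derivative pd i f x) (at (- x i))"
          using pd_hd'[OF f, of x i "- x i"] True by (simp add: fun_upd_idem)
        show ?thesis using vector_diff_chain_at[OF a b] by (simp add: o_def)
      qed
      have dl: "((\<lambda>t. f (x(i:=t)) - f (x(i := - t))) has_vector_derivative (pd i f x - (- pd i f x))) (at (x i))"
        by (rule has_vector_derivative_diff[OF pd_hd[OF f, of x i] d1])
      have dr: "((\<lambda>t. t *\<^sub>R g (x(i:=t))) has_vector_derivative (x i *\<^sub>R pd i g x + 1 *\<^sub>R g (x(i := x i)))) (at (x i))"
        by (rule has_vector_derivative_scaleR[OF DERIV_ident pd_hd[OF g(1)]])
      have "pd i f x - (- pd i f x) = x i *\<^sub>R pd i g x + 1 *\<^sub>R g (x(i := x i))"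
        using vector_derivative_at[OF dl] vector_derivative_at[OF dr] e by simp
      then have "2 *\<^sub>R pd i f x = g x" using True by (simp add: scaleR_2 fun_upd_idem)
      then show ?thesis using True by (simp add: ddv_def)
    qed
  qed
  then show ?thesis using g by simp
qed

lemma ddv_polyV: "f \<in> polyV m \<Longrightarrow> ddv i f \<in> polyV m"
  using ddv_props by blast

lemma ddv_eq: "f \<in> polyV m \<Longrightarrow> x i *\<^sub>R ddv i f x = f x - f (x(i := - x i))"
  using ddv_props by blast

lemma cancel_x:
  fixes g :: "('v::real_normed_vector) fn"
  assumes g: "g \<in> polyV m" and z: "\<forall>x. x i *\<^sub>R g x = 0"
  shows "g = (\<lambda>x. 0)"
proof (rule ext)
  fix x :: "nat \<Rightarrow> real"
  show "g x = 0"
  proof (cases "x i = 0")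
    case False then show ?thesis using z by auto
  next
    case True
    let ?h = "\<lambda>t. g (x(i:=t))"
    have c: "continuous (at (x i)) ?h"
      using has_vector_derivative_continuous[OF pd_hd[OF g, of x i]] by simp
    then have l1: "(?h \<longlongrightarrow> ?h (x i)) (at (x i))" by (simp add: continuous_at)
    have ev: "\<forall>\<^sub>F t in at (x i). ?h t = 0"
      unfolding eventually_at_filter
    proof (rule always_eventually, intro allI impI)
      fix t assume "t \<noteq> x i"
      then have "t \<noteq> 0" using True by simp
      moreover have "t *\<^sub>R g (x(i:=t)) = 0" using z[rule_format, of "x(i:=t)"] by simp
      ultimately show "?h t = 0" by simp
    qed
    have l2: "(?h \<longlongrightarrow> 0) (at (x i))"
      by (rule tendsto_eventually) (rule ev)
    have "?h (x i) = 0" using tendsto_unique[OF at_neq_bot l1 l2] .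
    then show ?thesis by simp
  qed
qed


lemma ddv_PA: "f \<in> PA \<Longrightarrow> ddv i f \<in> PA"
  by (auto simp: PA_def intro: ddv_polyV)

lemma ddv_eqA: "f \<in> PA \<Longrightarrow> x i *\<^sub>R ddv i f x = f x - f (x(i := - x i))"
  by (auto simp: PA_def intro: ddv_eq)

lemma cancelA:
  fixes g h :: "('v::real_normed_vector) fn"
  assumes "g \<in> PA" "h \<in> PA" "\<And>x. x i *\<^sub>R g x = x i *\<^sub>R h x"
  shows "g = h"
proof -
  have d: "(\<lambda>x. g x - h x) \<in> PA" using assms(1,2) by (rule PA_diff)
  then obtain m where m: "(\<lambda>x. g x - h x) \<in> polyV m" by (auto simp: PA_def)
  have "\<forall>x. x i *\<^sub>R (g x - h x) = 0" using assms(3) by (simp add: scaleR_right_diff_distrib)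
  then have "(\<lambda>x. g x - h x) = (\<lambda>x. 0)" by (rule cancel_x[OF m])
  then show ?thesis by (metis (no_types, lifting) eq_iff_diff_eq_0 ext)
qed

lemma refl_single: "reflset {i} f x = f (x(i := - x i))"
  by (simp add: reflset_sig sig_single)

lemma pd_diff: "f \<in> PA \<Longrightarrow> g \<in> PA \<Longrightarrow> pd i (\<lambda>x. f x - g x) = (\<lambda>x. pd i f x - pd i g x)"
proof -
  assume f: "f \<in> PA" and g: "g \<in> PA"
  have "pd i (\<lambda>x. f x + (-1) *\<^sub>R g x) = (\<lambda>x. pd i f x + pd i (\<lambda>x. (-1) *\<^sub>R g x) x)"
    using f g by (intro pd_add PA_scale)
  then show ?thesis using pd_scale[OF g, of i "-1"] by simp
qed

lemma ddv_add: "f \<in> PA \<Longrightarrow> g \<in> PA \<Longrightarrow> ddv i (\<lambda>x. f x + g x) = (\<lambda>x. ddv i f x + ddv i g x)"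
  by (rule cancelA[where i=i]) (auto simp: ddv_PA PA_add ddv_eqA scaleR_right_distrib)

lemma ddv_scale: "f \<in> PA \<Longrightarrow> ddv i (\<lambda>x. c *\<^sub>R f x) = (\<lambda>x. c *\<^sub>R ddv i f x)"
proof (rule cancelA[where i=i])
  assume f: "f \<in> PA"
  show "ddv i (\<lambda>x. c *\<^sub>R f x) \<in> PA" using f by (auto simp: ddv_PA PA_scale)
  show "(\<lambda>x. c *\<^sub>R ddv i f x) \<in> PA" using f by (auto simp: ddv_PA PA_scale)
  fix x
  have "x i *\<^sub>R (c *\<^sub>R ddv i f x) = c *\<^sub>R (x i *\<^sub>R ddv i f x)" by simp
  then show "x i *\<^sub>R ddv i (\<lambda>x. c *\<^sub>R f x) x = x i *\<^sub>R (c *\<^sub>R ddv i f x)"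
    using f by (simp add: ddv_eqA PA_scale scaleR_right_diff_distrib)
qed

lemma ddv_mulx_ne: "f \<in> PA \<Longrightarrow> 1 \<le> j \<Longrightarrow> i \<noteq> j \<Longrightarrow> ddv i (\<lambda>x. x j *\<^sub>R f x) = (\<lambda>x. x j *\<^sub>R ddv i f x)"
proof (rule cancelA[where i=i])
  assume f: "f \<in> PA" and j: "1 \<le> j" and ij: "i \<noteq> j"
  show "ddv i (\<lambda>x. x j *\<^sub>R f x) \<in> PA" using f j by (auto simp: ddv_PA PA_mulx)
  show "(\<lambda>x. x j *\<^sub>R ddv i f x) \<in> PA" using f j by (auto simp: ddv_PA PA_mulx)
  fix x
  have "x i *\<^sub>R (x j *\<^sub>R ddv i f x) = x j *\<^sub>R (x i *\<^sub>R ddv i f x)" by simp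
  then show "x i *\<^sub>R ddv i (\<lambda>x. x j *\<^sub>R f x) x = x i *\<^sub>R (x j *\<^sub>R ddv i f x)"
    using f j ij by (simp add: ddv_eqA PA_mulx scaleR_right_diff_distrib)
qed

lemma ddv_mulx_eq: "f \<in> PA \<Longrightarrow> 1 \<le> i \<Longrightarrow> ddv i (\<lambda>x. x i *\<^sub>R f x) = (\<lambda>x. f x + reflset {i} f x)"
proof (rule cancelA[where i=i])
  assume f: "f \<in> PA" and i: "1 \<le> i"
  show "ddv i (\<lambda>x. x i *\<^sub>R f x) \<in> PA" using f i by (auto simp: ddv_PA PA_mulx)
  show "(\<lambda>x. f x + reflset {i} f x) \<in> PA" using f by (auto simp: PA_add PA_refl)
  fix x
  show "x i *\<^sub>R ddv i (\<lambda>x. x i *\<^sub>R f x) x = x i *\<^sub>R (f x + reflset {i} f x)"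
    using f i by (simp add: ddv_eqA PA_mulx refl_single scaleR_right_distrib)
qed

lemma mulx_ddv: "f \<in> PA \<Longrightarrow> (\<lambda>x. x i *\<^sub>R ddv i f x) = (\<lambda>x. f x - reflset {i} f x)"
  by (simp add: ddv_eqA refl_single)

lemma ddv_refl: "f \<in> PA \<Longrightarrow> ddv i (reflset A f) = (\<lambda>x. (if i \<in> A then -1 else 1) *\<^sub>R reflset A (ddv i f) x)"
proof (rule cancelA[where i=i])
  assume f: "f \<in> PA"
  show "ddv i (reflset A f) \<in> PA" using f by (auto simp: ddv_PA PA_refl)
  show "(\<lambda>x. (if i \<in> A then -1 else 1) *\<^sub>R reflset A (ddv i f) x) \<in> PA" using f by (auto simp: ddv_PA PA_refl PA_scale)
  fix x
  have yi: "(sig A x) i = (if i \<in> A then -1 else 1) * x i" by (simp add: sig_def)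
  have su: "sig A (x(i := - x i)) = (sig A x)(i := - (sig A x) i)" by (auto simp: sig_def)
  have "x i *\<^sub>R ((if i \<in> A then -1 else 1) *\<^sub>R reflset A (ddv i f) x) = (sig A x) i *\<^sub>R ddv i f (sig A x)"
    using yi by (simp add: reflset_sig)
  also have "\<dots> = f (sig A x) - f (sig A (x(i := - x i)))" using f su by (simp add: ddv_eqA)
  also have "\<dots> = x i *\<^sub>R ddv i (reflset A f) x"
  proof -
    have e: "x i *\<^sub>R ddv i (reflset A f) x = reflset A f x - reflset A f (x(i:=-x i))" by (rule ddv_eqA[OF PA_refl[OF f]])
    have e2: "reflset A f x - reflset A f (x(i:=-x i)) = f (sig A x) - f (sig A (x(i := - x i)))" by (simp add: reflset_sig)
    show ?thesis by (simp only: e e2)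
  qed
  finally show "x i *\<^sub>R ddv i (reflset A f) x = x i *\<^sub>R ((if i \<in> A then -1 else 1) *\<^sub>R reflset A (ddv i f) x)" ..
qed

lemma ddv_lin: "f \<in> PA \<Longrightarrow> linear L \<Longrightarrow> ddv i (\<lambda>x. L (f x)) = (\<lambda>x. L (ddv i f x))"
proof (rule cancelA[where i=i])
  assume f: "f \<in> PA" and L: "linear L"
  show "ddv i (\<lambda>x. L (f x)) \<in> PA" using f L by (auto simp: ddv_PA PA_lin)
  show "(\<lambda>x. L (ddv i f x)) \<in> PA" using f L by (auto simp: ddv_PA PA_lin)
  fix x
  show "x i *\<^sub>R ddv i (\<lambda>x. L (f x)) x = x i *\<^sub>R L (ddv i f x)"
    using f L by (simp add: ddv_eqA PA_lin linear_scale[symmetric] linear_diff)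
qed

lemma ddv_pd: "f \<in> PA \<Longrightarrow> 1 \<le> i \<Longrightarrow> i \<noteq> j \<Longrightarrow> ddv i (pd j f) = pd j (ddv i f)"
proof (rule cancelA[where i=i])
  assume f: "f \<in> PA" and i: "1 \<le> i" and ij: "i \<noteq> j"
  show "ddv i (pd j f) \<in> PA" using f by (auto simp: ddv_PA pd_PA)
  show "pd j (ddv i f) \<in> PA" using f by (auto simp: ddv_PA pd_PA)
  fix x
  have "(\<lambda>x. x i *\<^sub>R pd j (ddv i f) x) = pd j (\<lambda>x. x i *\<^sub>R ddv i f x)"
    using pd_mulx[OF ddv_PA[OF f], of j i i] ij by simp
  also have "\<dots> = pd j (\<lambda>x. f x - reflset {i} f x)" by (simp add: mulx_ddv[OF f])
  also have "\<dots> = (\<lambda>x. pd j f x - pd j (reflset {i} f) x)" using f by (simp add: pd_diff PA_refl)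
  also have "\<dots> = (\<lambda>x. pd j f x - reflset {i} (pd j f) x)" using f ij by (simp add: pd_refl)
  finally have "x i *\<^sub>R pd j (ddv i f) x = pd j f x - reflset {i} (pd j f) x" by meson
  then show "x i *\<^sub>R ddv i (pd j f) x = x i *\<^sub>R pd j (ddv i f) x"
    using f by (simp add: ddv_eqA pd_PA refl_single)
qed


lemma ddv_ddv: "f \<in> PA \<Longrightarrow> i \<noteq> j \<Longrightarrow> 1 \<le> j \<Longrightarrow> ddv i (ddv j f) = ddv j (ddv i f)"
proof -
  assume f: "f \<in> PA" and ij: "i \<noteq> j" and j: "1 \<le> j"
  let ?D = "\<lambda>x. ddv i (ddv j f) x - ddv j (ddv i f) x"
  have D: "?D \<in> PA" using f by (simp add: PA_diff ddv_PA)
  have key: "\<And>x. x j *\<^sub>R (x i *\<^sub>R ddv i (ddv j f) x) = x i *\<^sub>R (x j *\<^sub>R ddv j (ddv i f) x)"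
  proof -
    fix x :: "nat \<Rightarrow> real"
    have c: "x(i := - x i, j := - x j) = x(j := - x j, i := - x i)" using ij by (rule fun_upd_twist)
    have "x j *\<^sub>R (x i *\<^sub>R ddv i (ddv j f) x) = x j *\<^sub>R ddv j f x - (x(i := - x i)) j *\<^sub>R ddv j f (x(i := - x i))"
      using f ij by (simp add: ddv_eqA ddv_PA scaleR_right_diff_distrib)
    also have "\<dots> = (f x - f (x(j := - x j))) - (f (x(i := - x i)) - f (x(i := - x i, j := - x j)))"
      using f ij ddv_eqA[OF f, where x="x(i := - x i)" and i=j] ddv_eqA[OF f, where x=x and i=j] by simp
    also have "\<dots> = (f x - f (x(i := - x i))) - (f (x(j := - x j)) - f (x(j := - x j, i := - x i)))"
      using c by (simp add: algebra_simps)
    also have "\<dots> = x i *\<^sub>R ddv i f x - (x(j := - x j)) i *\<^sub>R ddv i f (x(j := - x j))"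
      using f ij ddv_eqA[OF f, where x="x(j := - x j)" and i=i] ddv_eqA[OF f, where x=x and i=i] by simp
    also have "\<dots> = x i *\<^sub>R (x j *\<^sub>R ddv j (ddv i f) x)"
      using f ij by (simp add: ddv_eqA ddv_PA scaleR_right_diff_distrib)
    finally show "x j *\<^sub>R (x i *\<^sub>R ddv i (ddv j f) x) = x i *\<^sub>R (x j *\<^sub>R ddv j (ddv i f) x)" .
  qed
  have g: "(\<lambda>x. x j *\<^sub>R ?D x) = (\<lambda>x. 0)"
  proof (rule cancelA[where i=i])
    show "(\<lambda>x. x j *\<^sub>R ?D x) \<in> PA" using D j by (rule PA_mulx)
    show "(\<lambda>x. 0) \<in> PA" by (rule PA_zero)
    fix x show "x i *\<^sub>R (x j *\<^sub>R ?D x) = x i *\<^sub>R 0"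
      using key[of x] by (simp add: algebra_simps)
  qed
  have Dz: "?D = (\<lambda>x. 0)"
  proof (rule cancelA[where i=j])
    show "?D \<in> PA" by (rule D)
    show "(\<lambda>x. 0) \<in> PA" by (rule PA_zero)
    fix x show "x j *\<^sub>R ?D x = x j *\<^sub>R 0" using fun_cong[OF g, of x] by simp
  qed
  show ?thesis
  proof (rule ext)
    fix x show "ddv i (ddv j f) x = ddv j (ddv i f) x" using fun_cong[OF Dz, of x] by simp
  qed
qed


definition good :: "('v::real_normed_vector) oper \<Rightarrow> bool" where
  "good F \<longleftrightarrow> (\<forall>f\<in>PA. F f \<in> PA) \<and> (\<forall>f\<in>PA. \<forall>g\<in>PA. F (\<lambda>x. f x + g x) = (\<lambda>x. F f x + F g x))
     \<and> (\<forall>c. \<forall>f\<in>PA. F (\<lambda>x. c *\<^sub>R f x) = (\<lambda>x. c *\<^sub>R F f x))"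

typedef (overloaded) 'v opr = "{F :: ('v::real_normed_vector) oper. (\<forall>f. f \<notin> PA \<longrightarrow> F f = (\<lambda>x. 0)) \<and> good F}"
  morphisms rep Abs_opr
  by (rule exI[of _ "\<lambda>f x. 0"]) (auto simp: good_def PA_zero)

definition mkop :: "('v::real_normed_vector) oper \<Rightarrow> 'v opr" where
  "mkop F = Abs_opr (\<lambda>f. if f \<in> PA then F f else (\<lambda>x. 0))"

lemma rep_mkop: "good F \<Longrightarrow> rep (mkop F) = (\<lambda>f. if f \<in> PA then F f else (\<lambda>x. 0))"
  unfolding mkop_def
  by (rule Abs_opr_inverse) (auto simp: good_def PA_add PA_scale)

lemma rep_mkop_PA: "good F \<Longrightarrow> f \<in> PA \<Longrightarrow> rep (mkop F) f = F f"
  by (simp add: rep_mkop)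

lemma rep_good: "good (rep a)" using rep[of a] by auto

lemma rep_out: "f \<notin> PA \<Longrightarrow> rep a f = (\<lambda>x. 0)" using rep[of a] by auto

lemma rep_PA[simp]: "rep a f \<in> PA"
  by (cases "f \<in> PA") (auto simp: rep_out PA_zero rep_good[unfolded good_def])

lemma rep_add: "f \<in> PA \<Longrightarrow> g \<in> PA \<Longrightarrow> rep a (\<lambda>x. f x + g x) = (\<lambda>x. rep a f x + rep a g x)"
  using rep_good[of a] by (auto simp: good_def)

lemma rep_scale: "f \<in> PA \<Longrightarrow> rep a (\<lambda>x. c *\<^sub>R f x) = (\<lambda>x. c *\<^sub>R rep a f x)"
  using rep_good[of a] by (auto simp: good_def)

lemma rep_zero[simp]: "rep a (\<lambda>x. 0) = (\<lambda>x. 0)"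
  using rep_scale[of "\<lambda>x. 0" a 0] PA_zero by simp

lemma rep_minus_arg: "f \<in> PA \<Longrightarrow> rep a (\<lambda>x. - f x) = (\<lambda>x. - rep a f x)"
  using rep_scale[of f a "-1"] by simp

lemma rep_diff_arg: "f \<in> PA \<Longrightarrow> g \<in> PA \<Longrightarrow> rep a (\<lambda>x. f x - g x) = (\<lambda>x. rep a f x - rep a g x)"
  using rep_add[of f "\<lambda>x. - g x" a] rep_minus_arg[of g a] PA_minus[of g] by simp

lemma opr_eqI: "(\<And>f. f \<in> PA \<Longrightarrow> rep a f = rep b f) \<Longrightarrow> a = b"
proof -
  assume H: "\<And>f. f \<in> PA \<Longrightarrow> rep a f = rep b f"
  have "rep a = rep b"
  proof
    fix f show "rep a f = rep b f" by (cases "f \<in> PA") (auto simp: H rep_out)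
  qed
  then show "a = b" by (simp add: rep_inject)
qed

lemma good_zero: "good (\<lambda>f x. 0)" by (auto simp: good_def PA_zero)
lemma good_one: "good (\<lambda>f. f)" by (auto simp: good_def)
lemma good_plus: "good (\<lambda>f x. rep a f x + rep b f x)"
  by (auto simp: good_def PA_add rep_add rep_scale algebra_simps)
lemma good_uminus: "good (\<lambda>f x. - rep a f x)"
  by (auto simp: good_def PA_minus rep_add rep_scale algebra_simps)
lemma good_minus: "good (\<lambda>f x. rep a f x - rep b f x)"
  by (auto simp: good_def PA_diff rep_add rep_scale algebra_simps)
lemma good_times: "good (\<lambda>f. rep a (rep b f))"
  by (auto simp: good_def rep_add rep_scale)

instantiation opr :: (real_normed_vector) "{zero, one, plus, minus, uminus, times}"
begin
definition "0 = mkop (\<lambda>f x. 0)"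
definition "1 = mkop (\<lambda>f. f)"
definition "a + b = mkop (\<lambda>f x. rep a f x + rep b f x)"
definition "a - b = mkop (\<lambda>f x. rep a f x - rep b f x)"
definition "- a = mkop (\<lambda>f x. - rep a f x)"
definition "a * b = mkop (\<lambda>f. rep a (rep b f))"
instance ..
end

lemma rep_0[simp]: "rep (0::'v::real_normed_vector opr) f = (\<lambda>x. 0)"
  by (simp add: zero_opr_def rep_mkop good_zero)
lemma rep_1: "rep (1::'v::real_normed_vector opr) f = (if f \<in> PA then f else (\<lambda>x. 0))"
  by (simp add: one_opr_def rep_mkop good_one)
lemma rep_1_PA[simp]: "f \<in> PA \<Longrightarrow> rep (1::'v::real_normed_vector opr) f = f"
  by (simp add: rep_1)
lemma rep_plus[simp]: "rep (a + b) f = (\<lambda>x. rep a f x + rep b f x)"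
  by (cases "f \<in> PA") (simp_all add: plus_opr_def rep_mkop good_plus rep_out)
lemma rep_minus[simp]: "rep (a - b) f = (\<lambda>x. rep a f x - rep b f x)"
  by (cases "f \<in> PA") (simp_all add: minus_opr_def rep_mkop good_minus rep_out)
lemma rep_uminus[simp]: "rep (- a) f = (\<lambda>x. - rep a f x)"
  by (cases "f \<in> PA") (simp_all add: uminus_opr_def rep_mkop good_uminus rep_out)
lemma rep_times[simp]: "rep (a * b) f = rep a (rep b f)"
  by (cases "f \<in> PA") (simp_all add: times_opr_def rep_mkop good_times rep_out)

instance opr :: (real_normed_vector) ring
proof
  fix a b c :: "'v::real_normed_vector opr"
  show "a + b + c = a + (b + c)" by (rule opr_eqI) (simp add: add.assoc)
  show "a + b = b + a" by (rule opr_eqI) (simp add: add.commute)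
  show "0 + a = a" by (rule opr_eqI) simp
  show "- a + a = 0" by (rule opr_eqI) simp
  show "a - b = a + - b" by (rule opr_eqI) simp
  show "a * b * c = a * (b * c)" by (rule opr_eqI) simp
  show "(a + b) * c = a * c + b * c" by (rule opr_eqI) simp
  show "a * (b + c) = a * b + a * c" by (rule opr_eqI) (simp add: rep_add)
qed

instance opr :: (real_normed_vector) monoid_mult
proof
  fix a :: "'v::real_normed_vector opr"
  show "1 * a = a" by (rule opr_eqI) simp
  show "a * 1 = a" by (rule opr_eqI) simp
qed


definition Mx :: "nat \<Rightarrow> 'v::real_normed_vector opr" where "Mx i = mkop (\<lambda>f x. x i *\<^sub>R f x)"
definition Rf :: "nat set \<Rightarrow> 'v::real_normed_vector opr" where "Rf A = mkop (reflset A)"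
definition Ce :: "(nat \<Rightarrow> 'v \<Rightarrow> 'v) \<Rightarrow> nat \<Rightarrow> 'v::real_normed_vector opr" where "Ce e i = mkop (\<lambda>f x. e i (f x))"
definition Pd :: "nat \<Rightarrow> 'v::real_normed_vector opr" where "Pd i = mkop (pd i)"
definition Dd :: "nat \<Rightarrow> 'v::real_normed_vector opr" where "Dd i = mkop (ddv i)"
definition sc :: "real \<Rightarrow> 'v::real_normed_vector opr" where "sc c = mkop (\<lambda>f x. c *\<^sub>R f x)"

lemma good_Mx: "1 \<le> i \<Longrightarrow> good (\<lambda>f x. x i *\<^sub>R f x)"
  by (auto simp: good_def PA_mulx scaleR_right_distrib)
lemma reflset_add: "reflset A (\<lambda>x. f x + g x) = (\<lambda>x. reflset A f x + reflset A g x)"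
  by (simp add: reflset_def)
lemma reflset_scale: "reflset A (\<lambda>x. c *\<^sub>R f x) = (\<lambda>x. c *\<^sub>R reflset A f x)"
  by (simp add: reflset_def)
lemma good_Rf: "good (reflset A)"
  by (simp add: good_def PA_refl reflset_add reflset_scale)
lemma good_Ce: "linear L \<Longrightarrow> good (\<lambda>f x. L (f x))"
  by (auto simp: good_def PA_lin linear_add linear_scale)
lemma good_Pd: "good (pd i)"
  by (auto simp: good_def pd_PA pd_add pd_scale)
lemma good_Dd: "good (ddv i)"
  by (auto simp: good_def ddv_PA ddv_add ddv_scale)
lemma good_sc: "good (\<lambda>f x. c *\<^sub>R f x)"
  by (auto simp: good_def PA_scale scaleR_right_distrib)

lemma rep_Mx: "1 \<le> i \<Longrightarrow> f \<in> PA \<Longrightarrow> rep (Mx i) f = (\<lambda>x. x i *\<^sub>R f x)"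
  by (simp add: Mx_def rep_mkop_PA good_Mx)
lemma rep_Rf: "f \<in> PA \<Longrightarrow> rep (Rf A) f = reflset A f"
  by (simp add: Rf_def rep_mkop_PA good_Rf)
lemma rep_Ce: "linear (e i) \<Longrightarrow> f \<in> PA \<Longrightarrow> rep (Ce e i) f = (\<lambda>x. e i (f x))"
  by (simp add: Ce_def rep_mkop_PA good_Ce)
lemma rep_Pd: "f \<in> PA \<Longrightarrow> rep (Pd i) f = pd i f"
  by (simp add: Pd_def rep_mkop_PA good_Pd)
lemma rep_Dd: "f \<in> PA \<Longrightarrow> rep (Dd i) f = ddv i f"
  by (simp add: Dd_def rep_mkop_PA good_Dd)
lemma rep_sc: "f \<in> PA \<Longrightarrow> rep (sc c) f = (\<lambda>x. c *\<^sub>R f x)"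
  by (simp add: sc_def rep_mkop_PA good_sc)

lemmas reps = rep_Mx rep_Rf rep_Ce rep_Pd rep_Dd rep_sc

lemma sc_left: "sc c * a = a * sc c"
  by (rule opr_eqI) (simp add: rep_sc rep_scale)
lemma sc_mult: "sc c * sc d = sc (c * d)"
  by (rule opr_eqI) (simp add: rep_sc PA_scale)
lemma sc_add: "sc c + sc d = sc (c + d)"
  by (rule opr_eqI) (simp add: rep_sc scaleR_left_distrib)
lemma sc_1: "sc 1 = 1"
  by (rule opr_eqI) (simp add: rep_sc)
lemma sc_neg: "sc (- c) = - sc c"
  by (rule opr_eqI) (simp add: rep_sc)
lemma sc_0: "sc 0 = 0"
  by (rule opr_eqI) (simp add: rep_sc)

lemma Mx_comm: "1 \<le> i \<Longrightarrow> 1 \<le> j \<Longrightarrow> Mx i * Mx j = Mx j * Mx i"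
  by (rule opr_eqI) (simp add: rep_Mx PA_mulx mult.commute)

lemma sig_sig: "sig A (sig B x) = sig ((A - B) \<union> (B - A)) x"
  by (auto simp: sig_def)

lemma Rf_Rf: "Rf A * Rf B = Rf ((A - B) \<union> (B - A))"
  by (rule opr_eqI) (simp add: rep_Rf PA_refl, simp add: reflset_sig sig_sig Un_commute)

lemma Rf_empty: "Rf {} = 1"
  by (rule opr_eqI) (simp add: rep_Rf reflset_def)

lemma Rf_Mx: "1 \<le> i \<Longrightarrow> Rf A * Mx i = (if i \<in> A then - (Mx i * Rf A) else Mx i * Rf A)"
  by (rule opr_eqI) (simp add: rep_Rf rep_Mx PA_refl PA_mulx, auto simp: reflset_sig sig_def)

lemma Rf_Ce: "linear (e i) \<Longrightarrow> Rf A * Ce e i = Ce e i * Rf A"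
  by (rule opr_eqI) (simp add: rep_Rf rep_Ce PA_refl PA_lin, simp add: reflset_sig)

lemma Pd_Rf: "Pd i * Rf A = (if i \<in> A then - (Rf A * Pd i) else Rf A * Pd i)"
  by (rule opr_eqI) (auto simp: rep_Rf rep_Pd PA_refl pd_PA pd_refl)

lemma Dd_Rf: "Dd i * Rf A = (if i \<in> A then - (Rf A * Dd i) else Rf A * Dd i)"
  by (rule opr_eqI) (auto simp: rep_Rf rep_Dd PA_refl ddv_PA ddv_refl)

lemma Ce_Ce:
  assumes "clifford_module n e" "i \<in> {1..n}" "j \<in> {1..n}"
  shows "Ce e i * Ce e j + Ce e j * Ce e i = sc (if i = j then -2 else 0)"
proof -
  have l: "linear (e i)" "linear (e j)" using assms by (auto simp: clifford_module_def)
  have c: "\<And>v. e i (e j v) + e j (e i v) = (if i = j then -2 else 0) *\<^sub>R v"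
    using assms by (auto simp: clifford_module_def)
  show ?thesis
    by (rule opr_eqI) (simp add: rep_Ce rep_sc l PA_lin c)
qed

lemma Ce_Mx: "linear (e i) \<Longrightarrow> 1 \<le> j \<Longrightarrow> Ce e i * Mx j = Mx j * Ce e i"
  by (rule opr_eqI) (simp add: rep_Ce rep_Mx PA_lin PA_mulx linear_scale)

lemma Ce_Pd: "linear (e i) \<Longrightarrow> Ce e i * Pd j = Pd j * Ce e i"
  by (rule opr_eqI) (simp add: rep_Ce rep_Pd PA_lin pd_PA pd_linA)

lemma Ce_Dd: "linear (e i) \<Longrightarrow> Ce e i * Dd j = Dd j * Ce e i"
  by (rule opr_eqI) (simp add: rep_Ce rep_Dd PA_lin ddv_PA ddv_lin)

lemma Pd_Mx: "1 \<le> j \<Longrightarrow> Pd i * Mx j = Mx j * Pd i + (if i = j then 1 else 0)"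
  by (rule opr_eqI) (auto simp: rep_Pd rep_Mx PA_mulx pd_PA pd_mulx)

lemma Dd_Mx_ne: "1 \<le> j \<Longrightarrow> i \<noteq> j \<Longrightarrow> Dd i * Mx j = Mx j * Dd i"
  by (rule opr_eqI) (simp add: rep_Dd rep_Mx PA_mulx ddv_PA ddv_mulx_ne)

lemma Dd_Mx_eq: "1 \<le> i \<Longrightarrow> Dd i * Mx i = 1 + Rf {i}"
  by (rule opr_eqI) (simp add: rep_Dd rep_Mx rep_Rf PA_mulx ddv_mulx_eq)

lemma Mx_Dd: "1 \<le> i \<Longrightarrow> Mx i * Dd i = 1 - Rf {i}"
  by (rule opr_eqI) (simp add: rep_Dd rep_Mx rep_Rf ddv_PA mulx_ddv)

lemma Pd_Pd: "Pd i * Pd j = Pd j * Pd i"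
  by (rule opr_eqI) (simp add: rep_Pd pd_PA pd_comm)

lemma Dd_Pd: "1 \<le> i \<Longrightarrow> i \<noteq> j \<Longrightarrow> Dd i * Pd j = Pd j * Dd i"
  by (rule opr_eqI) (simp add: rep_Pd rep_Dd pd_PA ddv_PA ddv_pd)

lemma Dd_Dd: "1 \<le> j \<Longrightarrow> i \<noteq> j \<Longrightarrow> Dd i * Dd j = Dd j * Dd i"
  by (rule opr_eqI) (simp add: rep_Dd ddv_PA, rule ddv_ddv, simp_all)


lemma sum_anti:
  fixes f g :: "'b \<Rightarrow> 'a::ring"
  assumes "\<And>i j. i \<in> A \<Longrightarrow> j \<in> B \<Longrightarrow> f i * g j = - (g j * f i)"
  shows "sum f A * sum g B = - (sum g B * sum f A)"
proof -
  have "sum f A * sum g B = (\<Sum>i\<in>A. \<Sum>j\<in>B. f i * g j)" by (rule sum_product)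
  also have "\<dots> = (\<Sum>i\<in>A. \<Sum>j\<in>B. - (g j * f i))" using assms by simp
  also have "\<dots> = - (\<Sum>j\<in>B. \<Sum>i\<in>A. g j * f i)" by (simp add: sum_negf sum.swap[of _ A])
  also have "\<dots> = - (sum g B * sum f A)" by (simp add: sum_product)
  finally show ?thesis .
qed

lemma sum_comm1:
  fixes g :: "'b \<Rightarrow> 'a::ring"
  assumes "\<And>j. j \<in> B \<Longrightarrow> a * g j = g j * a"
  shows "a * sum g B = sum g B * a"
  using assms by (simp add: sum_distrib_left sum_distrib_right)

lemma sum_anti1:
  fixes g :: "'b \<Rightarrow> 'a::ring"
  assumes "\<And>j. j \<in> B \<Longrightarrow> a * g j = - (g j * a)"
  shows "a * sum g B = - (sum g B * a)"
  using assms by (simp add: sum_distrib_left sum_distrib_right sum_negf)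

lemma comm_add2:
  fixes a b c d :: "'a::ring"
  shows "a*c = c*a \<Longrightarrow> a*d = d*a \<Longrightarrow> b*c = c*b \<Longrightarrow> b*d = d*b \<Longrightarrow> (a+b)*(c+d) = (c+d)*(a+b)"
  by (simp add: algebra_simps)

definition Tk :: "(nat \<Rightarrow> real) \<Rightarrow> nat \<Rightarrow> 'v::real_normed_vector opr" where
  "Tk mu i = Pd i + sc (mu i) * Dd i"

lemma sc_mid: "a * (sc c * b) = sc c * (a * b)"
  using sc_left[of c a] by (simp add: mult.assoc[symmetric])

lemma sc_comm: "x * y = y * x \<Longrightarrow> (sc c * x) * y = y * (sc c * x)"
  by (simp only: mult.assoc sc_mid[of y c x])

lemma sc_comm2:
  assumes "x * y = y * x"
  shows "(sc c * x) * (sc d * y) = (sc d * y) * (sc c * x)"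
proof -
  have "(sc c * x) * (sc d * y) = sc c * (x * (sc d * y))" by (simp only: mult.assoc)
  also have "\<dots> = sc c * (sc d * (x * y))" by (simp only: sc_mid[of x d y])
  also have "\<dots> = sc (c * d) * (x * y)" by (simp only: mult.assoc[symmetric] sc_mult)
  finally have 1: "(sc c * x) * (sc d * y) = sc (c * d) * (x * y)" .
  have "(sc d * y) * (sc c * x) = sc d * (y * (sc c * x))" by (simp only: mult.assoc)
  also have "\<dots> = sc d * (sc c * (y * x))" by (simp only: sc_mid[of y c x])
  also have "\<dots> = sc (d * c) * (y * x)" by (simp only: mult.assoc[symmetric] sc_mult)
  finally have 2: "(sc d * y) * (sc c * x) = sc (d * c) * (y * x)" .
  show ?thesis using 1 2 assms by (simp add: mult.commute)
qed

lemma T_Mx_ne: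
  assumes "1 \<le> i" "1 \<le> j" "i \<noteq> j"
  shows "Tk mu i * Mx j = Mx j * (Tk mu i :: 'v::real_normed_vector opr)"
proof -
  have "Tk mu i * Mx j = (Pd i :: 'v opr) * Mx j + sc (mu i) * (Dd i * Mx j)" by (simp add: Tk_def distrib_right mult.assoc)
  also have "\<dots> = Mx j * Pd i + sc (mu i) * (Mx j * Dd i)" using assms by (simp add: Pd_Mx Dd_Mx_ne)
  also have "\<dots> = Mx j * Pd i + Mx j * (sc (mu i) * Dd i)" by (simp add: sc_mid)
  also have "\<dots> = Mx j * Tk mu i" by (simp add: Tk_def distrib_left)
  finally show ?thesis .
qed

lemma T_Mx_eq:
  assumes "1 \<le> i"
  shows "Tk mu i * Mx i = Mx i * Tk mu i + 1 + sc (2 * mu i) * (Rf {i} :: 'v::real_normed_vector opr)"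
proof -
  have a: "(Tk mu i :: 'v opr) * Mx i = Mx i * Pd i + 1 + (sc (mu i) + sc (mu i) * Rf {i})"
    using assms by (simp add: Tk_def distrib_right mult.assoc Pd_Mx Dd_Mx_eq distrib_left)
  have b0: "(Mx i :: 'v opr) * Tk mu i = Mx i * Pd i + sc (mu i) * (Mx i * Dd i)"
    by (simp add: Tk_def distrib_left) (simp add: sc_mid)
  have m: "(Mx i :: 'v opr) * Dd i = 1 - Rf {i}" by (rule Mx_Dd[OF assms])
  have m2: "sc (mu i) * ((Mx i :: 'v opr) * Dd i) = sc (mu i) - sc (mu i) * Rf {i}"
    unfolding m by (simp add: right_diff_distrib)
  have b: "(Mx i :: 'v opr) * Tk mu i = Mx i * Pd i + (sc (mu i) - sc (mu i) * Rf {i})"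
    by (simp only: b0 m2)
  have c: "sc (2 * mu i) * (Rf {i} :: 'v opr) = sc (mu i) * Rf {i} + sc (mu i) * Rf {i}"
    unfolding distrib_right[symmetric] sc_add by simp
  show ?thesis unfolding a b c by (simp add: algebra_simps)
qed

lemma T_Rf: "Tk mu i * Rf A = (if i \<in> A then - (Rf A * Tk mu i) else Rf A * (Tk mu i :: 'v::real_normed_vector opr))"
proof -
  have "Tk mu i * Rf A = (Pd i :: 'v opr) * Rf A + sc (mu i) * (Dd i * Rf A)" by (simp add: Tk_def distrib_right mult.assoc)
  also have "\<dots> = (if i \<in> A then - (Rf A * Pd i + sc (mu i) * (Rf A * Dd i)) else Rf A * Pd i + sc (mu i) * (Rf A * Dd i))"
    by (simp add: Pd_Rf Dd_Rf)
  also have "\<dots> = (if i \<in> A then - (Rf A * Tk mu i) else Rf A * Tk mu i)"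
    by (simp add: Tk_def distrib_left) (simp add: sc_mid)
  finally show ?thesis .
qed

lemma T_Ce: "linear (e k) \<Longrightarrow> Ce e k * Tk mu i = Tk mu i * (Ce e k :: 'v::real_normed_vector opr)"
proof -
  assume l: "linear (e k)"
  have "Ce e k * Tk mu i = (Ce e k :: 'v opr) * Pd i + sc (mu i) * (Ce e k * Dd i)"
    by (simp add: Tk_def distrib_left) (simp add: sc_mid)
  also have "\<dots> = Pd i * Ce e k + sc (mu i) * (Dd i * Ce e k)" using l by (simp add: Ce_Pd Ce_Dd)
  also have "\<dots> = Tk mu i * Ce e k" by (simp add: Tk_def distrib_right mult.assoc)
  finally show ?thesis .
qed

lemma T_T:
  assumes "1 \<le> i" "1 \<le> j" "i \<noteq> j"
  shows "Tk mu i * Tk mu j = Tk mu j * (Tk mu i :: 'v::real_normed_vector opr)"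
  unfolding Tk_def
proof (rule comm_add2)
  show "Pd i * Pd j = Pd j * Pd i" by (rule Pd_Pd)
  show "Pd i * (sc (mu j) * Dd j) = sc (mu j) * Dd j * Pd i"
    by (rule sym, rule sc_comm, rule Dd_Pd) (use assms in auto)
  show "sc (mu i) * Dd i * Pd j = Pd j * (sc (mu i) * Dd i)"
    using sc_comm[of "Dd i" "Pd j" "mu i"] Dd_Pd[of i j] assms by simp
  show "sc (mu i) * Dd i * (sc (mu j) * Dd j) = sc (mu j) * Dd j * (sc (mu i) * Dd i)"
    using sc_comm2[of "Dd i" "Dd j" "mu i" "mu j"] Dd_Dd[of j i] assms by simp
qed


definition xa :: "(nat \<Rightarrow> 'v \<Rightarrow> 'v) \<Rightarrow> nat \<Rightarrow> 'v::real_normed_vector opr" where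
  "xa e i = Mx i * Ce e i"
definition db :: "(nat \<Rightarrow> real) \<Rightarrow> (nat \<Rightarrow> 'v \<Rightarrow> 'v) \<Rightarrow> nat \<Rightarrow> 'v::real_normed_vector opr" where
  "db mu e i = Ce e i * Tk mu i"
definition XA :: "(nat \<Rightarrow> 'v \<Rightarrow> 'v) \<Rightarrow> nat set \<Rightarrow> 'v::real_normed_vector opr" where
  "XA e A = sum (xa e) A"
definition DA :: "(nat \<Rightarrow> real) \<Rightarrow> (nat \<Rightarrow> 'v \<Rightarrow> 'v) \<Rightarrow> nat set \<Rightarrow> 'v::real_normed_vector opr" where
  "DA mu e A = sum (db mu e) A"
definition Hh :: "'v::real_normed_vector opr" where "Hh = sc (1/2)"
definition GA :: "(nat \<Rightarrow> real) \<Rightarrow> (nat \<Rightarrow> 'v \<Rightarrow> 'v) \<Rightarrow> nat set \<Rightarrow> 'v::real_normed_vector opr" where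
  "GA mu e A = Hh * (XA e A * DA mu e A - DA mu e A * XA e A - 1) * Rf A"

lemma Hh_hh: "Hh + Hh = (1::'v::real_normed_vector opr)"
proof -
  have "(Hh::'v opr) + Hh = sc (1/2 + 1/2)" unfolding Hh_def by (rule sc_add)
  also have "\<dots> = sc 1" by simp
  finally show ?thesis by (simp only: sc_1)
qed

lemma Hh_comm: "Hh * a = a * Hh"
  unfolding Hh_def by (rule sc_left)

context
  fixes n :: nat and e :: "nat \<Rightarrow> 'v::real_normed_vector \<Rightarrow> 'v"
  assumes cl: "clifford_module n e"
begin

lemma lin: "i \<in> {1..n} \<Longrightarrow> linear (e i)"
  using cl by (auto simp: clifford_module_def)

lemma Ce_sq: "i \<in> {1..n} \<Longrightarrow> Ce e i * Ce e i = -1"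
proof -
  assume i: "i \<in> {1..n}"
  have c: "\<And>v. e i (e i v) = - v"
  proof -
    fix v
    have "e i (e i v) + e i (e i v) = (-2) *\<^sub>R v" using cl i by (auto simp: clifford_module_def)
    then have h2: "2 *\<^sub>R e i (e i v) = 2 *\<^sub>R (- v)" by (simp add: scaleR_2[symmetric])
    have "e i (e i v) = (1/2) *\<^sub>R (2 *\<^sub>R e i (e i v))" by simp
    also have "\<dots> = (1/2) *\<^sub>R (2 *\<^sub>R (- v))" by (simp only: h2)
    also have "\<dots> = - v" by simp
    finally show "e i (e i v) = - v" .
  qed
  show ?thesis by (rule opr_eqI) (simp add: rep_Ce lin[OF i] PA_lin c)
qed

lemma Ce_anti: "i \<in> {1..n} \<Longrightarrow> j \<in> {1..n} \<Longrightarrow> i \<noteq> j \<Longrightarrow> Ce e i * Ce e j = - (Ce e j * Ce e i)"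
  using Ce_Ce[OF cl, of i j] by (simp add: sc_0 eq_neg_iff_add_eq_0)

lemma xa_xa:
  assumes "i \<in> {1..n}" "j \<in> {1..n}" "i \<noteq> j"
  shows "xa e i * xa e j = - (xa e j * xa e i)"
proof -
  have p: "\<And>a b. a \<in> {1..n} \<Longrightarrow> b \<in> {1..n} \<Longrightarrow> xa e a * xa e b = (Mx a * Mx b) * (Ce e a * Ce e b)"
  proof -
    fix a b assume a: "a \<in> {1..n}" and b: "b \<in> {1..n}"
    have "xa e a * xa e b = Mx a * ((Ce e a * Mx b) * Ce e b)" by (simp add: xa_def mult.assoc)
    also have "\<dots> = Mx a * ((Mx b * Ce e a) * Ce e b)" using a b by (simp add: Ce_Mx lin)
    also have "\<dots> = (Mx a * Mx b) * (Ce e a * Ce e b)" by (simp add: mult.assoc)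
    finally show "xa e a * xa e b = (Mx a * Mx b) * (Ce e a * Ce e b)" .
  qed
  show ?thesis using assms by (simp add: p Ce_anti[of i j] Mx_comm[of i j])
qed

lemma db_xa:
  assumes "i \<in> {1..n}" "j \<in> {1..n}" "i \<noteq> j"
  shows "db mu e j * xa e i = - (xa e i * db mu e j)"
proof -
  have "db mu e j * xa e i = Ce e j * ((Tk mu j * Mx i) * Ce e i)" by (simp add: xa_def db_def mult.assoc)
  also have "\<dots> = Ce e j * ((Mx i * Tk mu j) * Ce e i)" using assms by (simp add: T_Mx_ne)
  also have "\<dots> = (Ce e j * Mx i) * (Tk mu j * Ce e i)" by (simp add: mult.assoc)
  also have "\<dots> = (Mx i * Ce e j) * (Ce e i * Tk mu j)" using assms by (simp add: Ce_Mx lin T_Ce)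
  also have "\<dots> = Mx i * ((Ce e j * Ce e i) * Tk mu j)" by (simp add: mult.assoc)
  also have "\<dots> = - (Mx i * ((Ce e i * Ce e j) * Tk mu j))" using assms by (simp add: Ce_anti[of j i])
  also have "\<dots> = - (xa e i * db mu e j)" by (simp add: xa_def db_def mult.assoc)
  finally show ?thesis .
qed

lemma xa_db:
  assumes "i \<in> {1..n}" "j \<in> {1..n}" "i \<noteq> j"
  shows "xa e i * db mu e j = - (db mu e j * xa e i)"
  using db_xa[OF assms, of mu] by simp

lemma db_db:
  assumes "i \<in> {1..n}" "j \<in> {1..n}" "i \<noteq> j"
  shows "db mu e i * db mu e j = - (db mu e j * db mu e i)"
proof -
  have p: "\<And>a b. a \<in> {1..n} \<Longrightarrow> b \<in> {1..n} \<Longrightarrow> db mu e a * db mu e b = (Ce e a * Ce e b) * (Tk mu a * Tk mu b)"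
  proof -
    fix a b assume a: "a \<in> {1..n}" and b: "b \<in> {1..n}"
    have "db mu e a * db mu e b = Ce e a * ((Tk mu a * Ce e b) * Tk mu b)" by (simp add: db_def mult.assoc)
    also have "\<dots> = Ce e a * ((Ce e b * Tk mu a) * Tk mu b)" using a b by (simp add: T_Ce lin)
    also have "\<dots> = (Ce e a * Ce e b) * (Tk mu a * Tk mu b)" by (simp add: mult.assoc)
    finally show "db mu e a * db mu e b = (Ce e a * Ce e b) * (Tk mu a * Tk mu b)" .
  qed
  show ?thesis using assms by (simp add: p Ce_anti[of i j] T_T[of i j])
qed

lemma Rf_xa: "j \<in> {1..n} \<Longrightarrow> Rf A * xa e j = (if j \<in> A then - (xa e j * Rf A) else xa e j * Rf A)"
proof -
  assume j: "j \<in> {1..n}"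
  have "Rf A * xa e j = (Rf A * Mx j) * Ce e j" by (simp add: xa_def mult.assoc)
  also have "\<dots> = (if j \<in> A then - (Mx j * (Rf A * Ce e j)) else Mx j * (Rf A * Ce e j))"
    using j by (simp add: Rf_Mx mult.assoc)
  also have "\<dots> = (if j \<in> A then - (xa e j * Rf A) else xa e j * Rf A)"
    using j by (simp add: Rf_Ce lin xa_def mult.assoc)
  finally show ?thesis .
qed

lemma Rf_db: "j \<in> {1..n} \<Longrightarrow> Rf A * db mu e j = (if j \<in> A then - (db mu e j * Rf A) else db mu e j * Rf A)"
proof -
  assume j: "j \<in> {1..n}"
  have t: "Rf A * Tk mu j = (if j \<in> A then - (Tk mu j * Rf A) else Tk mu j * Rf A)"
  proof (cases "j \<in> A")
    case True
    then have "Tk mu j * Rf A = - (Rf A * Tk mu j)" using T_Rf[of mu j A] by simp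
    then show ?thesis using True by (metis minus_minus)
  next
    case False
    have "Tk mu j * Rf A = Rf A * Tk mu j" using T_Rf[of mu j A] False by simp
    from this[symmetric] False show ?thesis by simp
  qed
  have "Rf A * db mu e j = (Rf A * Ce e j) * Tk mu j" by (simp add: db_def mult.assoc)
  also have "\<dots> = Ce e j * (Rf A * Tk mu j)" using j by (simp add: Rf_Ce lin mult.assoc)
  also have "\<dots> = (if j \<in> A then - (db mu e j * Rf A) else db mu e j * Rf A)"
    by (cases "j \<in> A") (simp_all add: t db_def mult.assoc)
  finally show ?thesis .
qed

end


lemma anti2:
  fixes X D R :: "'a::{ring,monoid_mult}"
  assumes "R*X = -(X*R)" "R*D = -(D*R)"
  shows "R*(X*D) = (X*D)*R"
proof -
  have "R*(X*D) = (R*X)*D" by (simp add: mult.assoc)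
  also have "\<dots> = -((X*R)*D)" using assms(1) by simp
  also have "\<dots> = -(X*(R*D))" by (simp add: mult.assoc)
  also have "\<dots> = X*(D*R)" using assms(2) by simp
  also have "\<dots> = (X*D)*R" by (simp add: mult.assoc)
  finally show ?thesis .
qed

lemma anti_W:
  fixes X D R :: "'a::{ring,monoid_mult}"
  assumes "R*X = -(X*R)" "R*D = -(D*R)"
  shows "R * (X*D - D*X - 1) = (X*D - D*X - 1) * R"
proof -
  have a: "R*(X*D) = (X*D)*R" using assms by (rule anti2)
  have b: "R*(D*X) = (D*X)*R" using assms(2,1) by (rule anti2)
  show ?thesis by (simp add: right_diff_distrib left_diff_distrib a b)
qed

lemma gblk_R:
  fixes X D R H :: "'a::{ring,monoid_mult}"
  assumes "R*X = -(X*R)" "R*D = -(D*R)" "R*H = H*R"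
  shows "R * (H*(X*D - D*X - 1)*R) = (H*(X*D - D*X - 1)*R) * R"
proof -
  have c: "R * (X*D - D*X - 1) = (X*D - D*X - 1) * R" using assms(1,2) by (rule anti_W)
  have "R * (H*(X*D - D*X - 1)*R) = (R*H)*(X*D - D*X - 1)*R" by (simp add: mult.assoc)
  also have "\<dots> = H*(R*(X*D - D*X - 1))*R" using assms(3) by (simp add: mult.assoc)
  also have "\<dots> = (H*(X*D - D*X - 1)*R) * R" using c by (simp add: mult.assoc)
  finally show ?thesis .
qed

lemma gblk_other:
  fixes X D R H Y :: "'a::{ring,monoid_mult}"
  assumes "Y*X = -(X*Y)" "Y*D = -(D*Y)" "Y*R = R*Y" "Y*H = H*Y"
  shows "Y * (H*(X*D - D*X - 1)*R) = (H*(X*D - D*X - 1)*R) * Y"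
proof -
  have c: "Y * (X*D - D*X - 1) = (X*D - D*X - 1) * Y" using assms(1,2) by (rule anti_W)
  have "Y * (H*(X*D - D*X - 1)*R) = (Y*H)*(X*D - D*X - 1)*R" by (simp add: mult.assoc)
  also have "\<dots> = H*(Y*(X*D - D*X - 1))*R" using assms(4) by (simp add: mult.assoc)
  also have "\<dots> = H*(X*D - D*X - 1)*(Y*R)" using c by (simp add: mult.assoc)
  also have "\<dots> = (H*(X*D - D*X - 1)*R) * Y" using assms(3) by (simp add: mult.assoc)
  finally show ?thesis .
qed

lemma gblk_r13:
  fixes X D R H :: "'a::{ring,monoid_mult}"
  assumes "R*R = 1" "H + H = 1"
  shows "D*X = X*D - (H*(X*D - D*X - 1)*R)*R - (H*(X*D - D*X - 1)*R)*R - 1"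
proof -
  have g: "(H*(X*D - D*X - 1)*R)*R = H*(X*D - D*X - 1)" using assms(1) by (simp add: mult.assoc)
  have w: "H*(X*D - D*X - 1) + H*(X*D - D*X - 1) = X*D - D*X - 1"
    using assms(2) by (metis distrib_right mult_1_left)
  have "X*D - (H*(X*D - D*X - 1)*R)*R - (H*(X*D - D*X - 1)*R)*R - 1
      = X*D - (H*(X*D - D*X - 1) + H*(X*D - D*X - 1)) - 1" unfolding g by (simp add: algebra_simps)
  also have "\<dots> = D*X" unfolding w by (simp add: algebra_simps)
  finally show ?thesis by simp
qed

lemma rep_sum: "rep (sum F A) f = (\<lambda>x. \<Sum>i\<in>A. rep (F i) f x)"
proof (cases "finite A")
  case True then show ?thesis by (induction A rule: finite_induct) simp_all
next
  case False then show ?thesis by simp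
qed

context
  fixes n :: nat and e :: "nat \<Rightarrow> 'v::real_normed_vector \<Rightarrow> 'v"
  assumes cl: "clifford_module n e"
begin

lemma fin: "A \<subseteq> {1..n} \<Longrightarrow> finite A" by (rule finite_subset) auto

lemma XA_union: "A \<subseteq> {1..n} \<Longrightarrow> B \<subseteq> {1..n} \<Longrightarrow> A \<inter> B = {} \<Longrightarrow> XA e (A \<union> B) = XA e A + XA e B"
  unfolding XA_def by (rule sum.union_disjoint) (auto intro: finite_subset[OF _ finite_atLeastAtMost])
lemma DA_union: "A \<subseteq> {1..n} \<Longrightarrow> B \<subseteq> {1..n} \<Longrightarrow> A \<inter> B = {} \<Longrightarrow> DA mu e (A \<union> B) = DA mu e A + DA mu e B"
  unfolding DA_def by (rule sum.union_disjoint) (auto intro: finite_subset[OF _ finite_atLeastAtMost])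

lemma blk_XX: "A \<subseteq> {1..n} \<Longrightarrow> B \<subseteq> {1..n} \<Longrightarrow> A \<inter> B = {} \<Longrightarrow> XA e A * XA e B = - (XA e B * XA e A)"
  unfolding XA_def by (rule sum_anti) (rule xa_xa[OF cl], auto)
lemma blk_XD: "A \<subseteq> {1..n} \<Longrightarrow> B \<subseteq> {1..n} \<Longrightarrow> A \<inter> B = {} \<Longrightarrow> XA e A * DA mu e B = - (DA mu e B * XA e A)"
  unfolding XA_def DA_def by (rule sum_anti) (rule xa_db[OF cl], auto)
lemma blk_DX: "A \<subseteq> {1..n} \<Longrightarrow> B \<subseteq> {1..n} \<Longrightarrow> A \<inter> B = {} \<Longrightarrow> DA mu e A * XA e B = - (XA e B * DA mu e A)"
  unfolding XA_def DA_def by (rule sum_anti) (rule db_xa[OF cl], auto)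
lemma blk_DD: "A \<subseteq> {1..n} \<Longrightarrow> B \<subseteq> {1..n} \<Longrightarrow> A \<inter> B = {} \<Longrightarrow> DA mu e A * DA mu e B = - (DA mu e B * DA mu e A)"
  unfolding DA_def by (rule sum_anti) (rule db_db[OF cl], auto)

lemma blk_RX_out: "A \<subseteq> {1..n} \<Longrightarrow> A \<inter> B = {} \<Longrightarrow> Rf B * XA e A = XA e A * Rf B"
  unfolding XA_def by (rule sum_comm1) (subst Rf_xa[OF cl], auto)
lemma blk_RD_out: "A \<subseteq> {1..n} \<Longrightarrow> A \<inter> B = {} \<Longrightarrow> Rf B * DA mu e A = DA mu e A * Rf B"
  unfolding DA_def by (rule sum_comm1) (subst Rf_db[OF cl], auto)
lemma blk_RX_in: "A \<subseteq> {1..n} \<Longrightarrow> Rf A * XA e A = - (XA e A * Rf A)"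
  unfolding XA_def by (rule sum_anti1) (subst Rf_xa[OF cl], auto)
lemma blk_RD_in: "A \<subseteq> {1..n} \<Longrightarrow> Rf A * DA mu e A = - (DA mu e A * Rf A)"
  unfolding DA_def by (rule sum_anti1) (subst Rf_db[OF cl], auto)

lemma base_G:
  assumes k: "k \<in> {1..n}"
  shows "GA mu e {k} = sc (mu k)"
proof -
  have l: "linear (e k)" using k by (rule lin[OF cl])
  have k1: "1 \<le> k" using k by simp
  have XD: "xa e k * db mu e k = - (Mx k * Tk mu k)"
    using Ce_sq[OF cl k] by (simp add: xa_def db_def mult.assoc[symmetric]) (simp add: mult.assoc)
  have "db mu e k * xa e k = Ce e k * ((Tk mu k * Mx k) * Ce e k)" by (simp add: xa_def db_def mult.assoc)
  also have "\<dots> = Ce e k * ((Mx k * Tk mu k + 1 + sc (2 * mu k) * Rf {k}) * Ce e k)" using k1 by (simp add: T_Mx_eq)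
  also have "\<dots> = Ce e k * (Ce e k * (Mx k * Tk mu k + 1 + sc (2 * mu k) * Rf {k}))"
  proof -
    have "(Mx k * Tk mu k + 1 + sc (2 * mu k) * Rf {k}) * Ce e k = Ce e k * (Mx k * Tk mu k + 1 + sc (2 * mu k) * Rf {k})"
    proof -
      have c1: "Ce e k * (Mx k * Tk mu k) = (Mx k * Tk mu k) * Ce e k"
      proof -
        have "Ce e k * (Mx k * Tk mu k) = (Ce e k * Mx k) * Tk mu k" by (simp only: mult.assoc)
        also have "\<dots> = Mx k * (Ce e k * Tk mu k)" using l k1 by (simp only: Ce_Mx mult.assoc)
        also have "\<dots> = (Mx k * Tk mu k) * Ce e k" using l by (simp only: T_Ce mult.assoc)
        finally show ?thesis .
      qed
      have c2: "Ce e k * (sc (2 * mu k) * Rf {k}) = (sc (2 * mu k) * Rf {k}) * Ce e k"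
      proof -
        have "Ce e k * (sc (2 * mu k) * Rf {k}) = sc (2 * mu k) * (Ce e k * Rf {k})" by (rule sc_mid)
        also have "\<dots> = sc (2 * mu k) * (Rf {k} * Ce e k)" using Rf_Ce[where e=e and i=k and A="{k}", OF l] by simp
        also have "\<dots> = (sc (2 * mu k) * Rf {k}) * Ce e k" by (simp only: mult.assoc)
        finally show ?thesis .
      qed
      show ?thesis using c1 c2 by (simp add: algebra_simps)
    qed
    then show ?thesis by simp
  qed
  also have "\<dots> = - (Mx k * Tk mu k + 1 + sc (2 * mu k) * Rf {k})"
    using Ce_sq[OF cl k] by (simp add: mult.assoc[symmetric])
  finally have DX: "db mu e k * xa e k = - (Mx k * Tk mu k + 1 + sc (2 * mu k) * Rf {k})" .
  have W: "XA e {k} * DA mu e {k} - DA mu e {k} * XA e {k} - 1 = sc (2 * mu k) * Rf {k}"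
    by (simp add: XA_def DA_def XD DX)
  have "GA mu e {k} = Hh * (sc (2 * mu k) * Rf {k}) * Rf {k}" by (simp add: GA_def W)
  also have "\<dots> = sc (1/2) * sc (2 * mu k) * (Rf {k} * Rf {k})" by (simp add: Hh_def mult.assoc)
  also have "\<dots> = sc (mu k)" by (simp add: sc_mult Rf_Rf Rf_empty)
  finally show ?thesis .
qed

lemma rep_XA: "A \<subseteq> {1..n} \<Longrightarrow> g \<in> PA \<Longrightarrow> rep (XA e A) g = Xop e A g"
proof -
  assume A: "A \<subseteq> {1..n}" and g: "g \<in> PA"
  have "\<And>i. i \<in> A \<Longrightarrow> rep (xa e i) g = (\<lambda>x. x i *\<^sub>R e i (g x))"
  proof -
    fix i assume "i \<in> A"
    then have "i \<in> {1..n}" using A by auto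
    then show "rep (xa e i) g = (\<lambda>x. x i *\<^sub>R e i (g x))"
      using g by (simp add: xa_def rep_Ce rep_Mx lin[OF cl] PA_lin)
  qed
  then show ?thesis by (simp add: XA_def rep_sum Xop_def)
qed

lemma rep_Tk: "g \<in> PA \<Longrightarrow> rep (Tk mu i) g = dunkl mu i g"
  by (simp add: Tk_def rep_Pd rep_Dd rep_sc ddv_PA dunkl_ddv)

lemma dunkl_PA: "g \<in> PA \<Longrightarrow> dunkl mu i g \<in> PA"
  using rep_Tk[of g mu i] rep_PA by metis

lemma rep_DA: "A \<subseteq> {1..n} \<Longrightarrow> g \<in> PA \<Longrightarrow> rep (DA mu e A) g = Dirac mu e A g"
proof -
  assume A: "A \<subseteq> {1..n}" and g: "g \<in> PA"
  have "\<And>i. i \<in> A \<Longrightarrow> rep (db mu e i) g = (\<lambda>x. e i (dunkl mu i g x))"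
  proof -
    fix i assume "i \<in> A"
    then have "i \<in> {1..n}" using A by auto
    then show "rep (db mu e i) g = (\<lambda>x. e i (dunkl mu i g x))"
      using g by (simp add: db_def rep_Ce rep_Tk lin[OF cl] dunkl_PA)
  qed
  then show ?thesis by (simp add: DA_def rep_sum Dirac_def)
qed

lemma rep_GA: "A \<subseteq> {1..n} \<Longrightarrow> f \<in> PA \<Longrightarrow> rep (GA mu e A) f = Gam mu e A f"
  by (simp add: GA_def Hh_def rep_sc rep_Rf PA_refl PA_diff Gam_def Sop_def rep_XA[symmetric] rep_DA[symmetric])

end


lemma kk_alg:
  fixes P Y C :: "'a::{ring,monoid_mult}"
  assumes h: "P*Y + Y*P = C + C" and cy: "C*Y = Y*C" and cp: "C*P = P*C"
  shows "(Y*P - C)*(Y*P - C) = C*C - Y*Y*(P*P)"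
proof -
  have h1: "P*Y = C + C - Y*P" using h by (simp add: algebra_simps)
  have h2: "Y*P*C = C*(Y*P)" by (metis cy cp mult.assoc)
  have h3: "Y*P*(Y*P) = C*(Y*P) + C*(Y*P) - Y*Y*(P*P)"
  proof -
    have "Y*P*(Y*P) = Y*(P*Y)*P" by (simp add: mult.assoc)
    also have "\<dots> = Y*C*P + Y*C*P - Y*Y*(P*P)" unfolding h1 by (simp add: algebra_simps)
    also have "\<dots> = C*(Y*P) + C*(Y*P) - Y*Y*(P*P)" using cy by (simp add: mult.assoc[symmetric])
    finally show ?thesis .
  qed
  have "(Y*P - C)*(Y*P - C) = Y*P*(Y*P) - Y*P*C - C*(Y*P) + C*C" by (simp add: algebra_simps)
  also have "\<dots> = C*C - Y*Y*(P*P)" unfolding h2 h3 by (simp add: algebra_simps)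
  finally show ?thesis .
qed

locale comm6 =
  fixes h a b c q p :: "'a::{ring,monoid_mult}"
  assumes hh: "h + h = 1"
 and c0: "a * h = h * a"
 and c1: "b * h = h * b"
 and c2: "b * a = a * b"
 and c3: "c * h = h * c"
 and c4: "c * a = a * c"
 and c5: "c * b = b * c"
 and c6: "q * h = h * q"
 and c7: "q * a = a * q"
 and c8: "q * b = b * q"
 and c9: "q * c = c * q"
 and c10: "p * h = h * p"
 and c11: "p * a = a * p"
 and c12: "p * b = b * p"
 and c13: "p * c = c * p"
 and c14: "p * q = q * p"
begin
lemma cz0: "a * (h * z) = h * (a * z)" by (metis c0 mult.assoc)
lemma cz1: "b * (h * z) = h * (b * z)" by (metis c1 mult.assoc)
lemma cz2: "b * (a * z) = a * (b * z)" by (metis c2 mult.assoc)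
lemma cz3: "c * (h * z) = h * (c * z)" by (metis c3 mult.assoc)
lemma cz4: "c * (a * z) = a * (c * z)" by (metis c4 mult.assoc)
lemma cz5: "c * (b * z) = b * (c * z)" by (metis c5 mult.assoc)
lemma cz6: "q * (h * z) = h * (q * z)" by (metis c6 mult.assoc)
lemma cz7: "q * (a * z) = a * (q * z)" by (metis c7 mult.assoc)
lemma cz8: "q * (b * z) = b * (q * z)" by (metis c8 mult.assoc)
lemma cz9: "q * (c * z) = c * (q * z)" by (metis c9 mult.assoc)
lemma cz10: "p * (h * z) = h * (p * z)" by (metis c10 mult.assoc)
lemma cz11: "p * (a * z) = a * (p * z)" by (metis c11 mult.assoc)
lemma cz12: "p * (b * z) = b * (p * z)" by (metis c12 mult.assoc)
lemma cz13: "p * (c * z) = c * (p * z)" by (metis c13 mult.assoc)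
lemma cz14: "p * (q * z) = q * (p * z)" by (metis c14 mult.assoc)
lemma hz: "h * x + h * x = x" by (metis distrib_right hh mult_1_left)
lemma hz2: "h * x + (h * x + y) = x + y" by (metis add.assoc hz)
lemmas cnf = c0 cz0 c1 cz1 c2 cz2 c3 cz3 c4 cz4 c5 cz5 c6 cz6 c7 cz7 c8 cz8 c9 cz9 c10 cz10 c11 cz11 c12 cz12 c13 cz13 c14 cz14
lemma fin1: "(c+q)*(a+b)*((c+q)*(a+b)) - (q*q+a*a+b*b+c*c+p+(a*b+c*q)+(a*b+c*q) - p*p - h*h)*((p-h)*(p-h))
  = (q - p + c + h)*(q + p + c - h)*(a - p + b + h)*(a + p + b - h)"
  by (simp add: cnf algebra_simps hh hz hz2 diff_eq_eq eq_diff_eq)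
lemma fin2: "(c-q)*(a-b)*((c-q)*(a-b)) - (q*q+a*a+b*b+c*c-p-(a*b+c*q)-(a*b+c*q) - p*p - h*h)*((p+h)*(p+h))
  = (q - p - c - h)*(q + p - c + h)*(a - p - b - h)*(a + p - b + h)"
  by (simp add: cnf algebra_simps hh hz hz2 diff_eq_eq eq_diff_eq)
end

locale duo =
  fixes X1 D1 R1 G1 X2 D2 R2 G2 H :: "'a::{ring,monoid_mult}"
  assumes hh: "H + H = 1"
 and r0: "X2 * X1 = - (X1 * X2)"
 and r1: "X2 * D1 = - (D1 * X2)"
 and r2: "D2 * X1 = - (X1 * D2)"
 and r3: "D2 * D1 = - (D1 * D2)"
 and r4: "R2 * X1 = X1 * R2"
 and r5: "X2 * R1 = R1 * X2"
 and r6: "R2 * D1 = D1 * R2"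
 and r7: "D2 * R1 = R1 * D2"
 and r8: "R2 * R1 = R1 * R2"
 and r9: "G2 * G1 = G1 * G2"
 and r10: "R1 * R1 = 1"
 and r11: "R1 * X1 = - (X1 * R1)"
 and r12: "R1 * D1 = - (D1 * R1)"
 and r13: "D1 * X1 = X1 * D1 - (G1 * R1) - (G1 * R1) - (1)"
 and r14: "X1 * G1 = G1 * X1"
 and r15: "D1 * G1 = G1 * D1"
 and r16: "R1 * G1 = G1 * R1"
 and r17: "X2 * G1 = G1 * X2"
 and r18: "D2 * G1 = G1 * D2"
 and r19: "R2 * G1 = G1 * R2"
 and r20: "X1 * H = H * X1"
 and r21: "D1 * H = H * D1"
 and r22: "R1 * H = H * R1"
 and r23: "G1 * H = H * G1"
 and r24: "R2 * R2 = 1"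
 and r25: "R2 * X2 = - (X2 * R2)"
 and r26: "R2 * D2 = - (D2 * R2)"
 and r27: "D2 * X2 = X2 * D2 - (G2 * R2) - (G2 * R2) - (1)"
 and r28: "X1 * G2 = G2 * X1"
 and r29: "D1 * G2 = G2 * D1"
 and r30: "R1 * G2 = G2 * R1"
 and r31: "X2 * G2 = G2 * X2"
 and r32: "D2 * G2 = G2 * D2"
 and r33: "R2 * G2 = G2 * R2"
 and r34: "X2 * H = H * X2"
 and r35: "D2 * H = H * D2"
 and r36: "R2 * H = H * R2"
 and r37: "G2 * H = H * G2"
begin
lemma z0: "X2 * (X1 * z) = - (X1 * (X2 * z))"
  by (simp only: mult.assoc[symmetric] r0 ; simp add: algebra_simps)
lemma z1: "X2 * (D1 * z) = - (D1 * (X2 * z))"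
  by (simp only: mult.assoc[symmetric] r1 ; simp add: algebra_simps)
lemma z2: "D2 * (X1 * z) = - (X1 * (D2 * z))"
  by (simp only: mult.assoc[symmetric] r2 ; simp add: algebra_simps)
lemma z3: "D2 * (D1 * z) = - (D1 * (D2 * z))"
  by (simp only: mult.assoc[symmetric] r3 ; simp add: algebra_simps)
lemma z4: "R2 * (X1 * z) = X1 * (R2 * z)"
  by (simp only: mult.assoc[symmetric] r4 ; simp add: algebra_simps)
lemma z5: "X2 * (R1 * z) = R1 * (X2 * z)"
  by (simp only: mult.assoc[symmetric] r5 ; simp add: algebra_simps)
lemma z6: "R2 * (D1 * z) = D1 * (R2 * z)"
  by (simp only: mult.assoc[symmetric] r6 ; simp add: algebra_simps)
lemma z7: "D2 * (R1 * z) = R1 * (D2 * z)"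
  by (simp only: mult.assoc[symmetric] r7 ; simp add: algebra_simps)
lemma z8: "R2 * (R1 * z) = R1 * (R2 * z)"
  by (simp only: mult.assoc[symmetric] r8 ; simp add: algebra_simps)
lemma z9: "G2 * (G1 * z) = G1 * (G2 * z)"
  by (simp only: mult.assoc[symmetric] r9 ; simp add: algebra_simps)
lemma z10: "R1 * (R1 * z) = z"
  by (simp only: mult.assoc[symmetric] r10 ; simp add: algebra_simps)
lemma z11: "R1 * (X1 * z) = - (X1 * (R1 * z))"
  by (simp only: mult.assoc[symmetric] r11 ; simp add: algebra_simps)
lemma z12: "R1 * (D1 * z) = - (D1 * (R1 * z))"
  by (simp only: mult.assoc[symmetric] r12 ; simp add: algebra_simps)
lemma z13: "D1 * (X1 * z) = X1 * (D1 * z) - (G1 * (R1 * z)) - (G1 * (R1 * z)) - (z)"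
  by (simp only: mult.assoc[symmetric] r13 ; simp add: algebra_simps)
lemma z14: "X1 * (G1 * z) = G1 * (X1 * z)"
  by (simp only: mult.assoc[symmetric] r14 ; simp add: algebra_simps)
lemma z15: "D1 * (G1 * z) = G1 * (D1 * z)"
  by (simp only: mult.assoc[symmetric] r15 ; simp add: algebra_simps)
lemma z16: "R1 * (G1 * z) = G1 * (R1 * z)"
  by (simp only: mult.assoc[symmetric] r16 ; simp add: algebra_simps)
lemma z17: "X2 * (G1 * z) = G1 * (X2 * z)"
  by (simp only: mult.assoc[symmetric] r17 ; simp add: algebra_simps)
lemma z18: "D2 * (G1 * z) = G1 * (D2 * z)"
  by (simp only: mult.assoc[symmetric] r18 ; simp add: algebra_simps)
lemma z19: "R2 * (G1 * z) = G1 * (R2 * z)"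
  by (simp only: mult.assoc[symmetric] r19 ; simp add: algebra_simps)
lemma z20: "X1 * (H * z) = H * (X1 * z)"
  by (simp only: mult.assoc[symmetric] r20 ; simp add: algebra_simps)
lemma z21: "D1 * (H * z) = H * (D1 * z)"
  by (simp only: mult.assoc[symmetric] r21 ; simp add: algebra_simps)
lemma z22: "R1 * (H * z) = H * (R1 * z)"
  by (simp only: mult.assoc[symmetric] r22 ; simp add: algebra_simps)
lemma z23: "G1 * (H * z) = H * (G1 * z)"
  by (simp only: mult.assoc[symmetric] r23 ; simp add: algebra_simps)
lemma z24: "R2 * (R2 * z) = z"
  by (simp only: mult.assoc[symmetric] r24 ; simp add: algebra_simps)
lemma z25: "R2 * (X2 * z) = - (X2 * (R2 * z))"
  by (simp only: mult.assoc[symmetric] r25 ; simp add: algebra_simps)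
lemma z26: "R2 * (D2 * z) = - (D2 * (R2 * z))"
  by (simp only: mult.assoc[symmetric] r26 ; simp add: algebra_simps)
lemma z27: "D2 * (X2 * z) = X2 * (D2 * z) - (G2 * (R2 * z)) - (G2 * (R2 * z)) - (z)"
  by (simp only: mult.assoc[symmetric] r27 ; simp add: algebra_simps)
lemma z28: "X1 * (G2 * z) = G2 * (X1 * z)"
  by (simp only: mult.assoc[symmetric] r28 ; simp add: algebra_simps)
lemma z29: "D1 * (G2 * z) = G2 * (D1 * z)"
  by (simp only: mult.assoc[symmetric] r29 ; simp add: algebra_simps)
lemma z30: "R1 * (G2 * z) = G2 * (R1 * z)"
  by (simp only: mult.assoc[symmetric] r30 ; simp add: algebra_simps)
lemma z31: "X2 * (G2 * z) = G2 * (X2 * z)"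
  by (simp only: mult.assoc[symmetric] r31 ; simp add: algebra_simps)
lemma z32: "D2 * (G2 * z) = G2 * (D2 * z)"
  by (simp only: mult.assoc[symmetric] r32 ; simp add: algebra_simps)
lemma z33: "R2 * (G2 * z) = G2 * (R2 * z)"
  by (simp only: mult.assoc[symmetric] r33 ; simp add: algebra_simps)
lemma z34: "X2 * (H * z) = H * (X2 * z)"
  by (simp only: mult.assoc[symmetric] r34 ; simp add: algebra_simps)
lemma z35: "D2 * (H * z) = H * (D2 * z)"
  by (simp only: mult.assoc[symmetric] r35 ; simp add: algebra_simps)
lemma z36: "R2 * (H * z) = H * (R2 * z)"
  by (simp only: mult.assoc[symmetric] r36 ; simp add: algebra_simps)
lemma z37: "G2 * (H * z) = H * (G2 * z)"
  by (simp only: mult.assoc[symmetric] r37 ; simp add: algebra_simps)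
lemma hz: "H * x + H * x = x" by (metis distrib_right hh mult_1_left)
lemma hz2: "H * x + (H * x + y) = x + y" by (metis add.assoc hz)
lemmas nf = r0 z0 r1 z1 r2 z2 r3 z3 r4 z4 r5 z5 r6 z6 r7 z7 r8 z8 r9 z9 r10 z10 r11 z11 r12 z12 r13 z13 r14 z14 r15 z15 r16 z16 r17 z17 r18 z18 r19 z19 r20 z20 r21 z21 r22 z22 r23 z23 r24 z24 r25 z25 r26 z26 r27 z27 r28 z28 r29 z29 r30 z30 r31 z31 r32 z32 r33 z33 r34 z34 r35 z35 r36 z36 r37 z37
definition "gm x d r = H * (x*d - d*x - 1) * r"
lemma uX: "gm (X1+X2) (D1+D2) (R1*R2) * (X1+X2) = (X1+X2) * gm (X1+X2) (D1+D2) (R1*R2)"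
  unfolding gm_def by (simp add: nf algebra_simps hh hz hz2 diff_eq_eq eq_diff_eq)
lemma uD: "gm (X1+X2) (D1+D2) (R1*R2) * (D1+D2) = (D1+D2) * gm (X1+X2) (D1+D2) (R1*R2)"
  unfolding gm_def by (simp add: nf algebra_simps hh hz hz2 diff_eq_eq eq_diff_eq)
lemma uR: "gm (X1+X2) (D1+D2) (R1*R2) * (R1*R2) = (R1*R2) * gm (X1+X2) (D1+D2) (R1*R2)"
  unfolding gm_def by (simp add: nf algebra_simps hh hz hz2 diff_eq_eq eq_diff_eq)
end

locale tri =
  fixes X1 D1 R1 G1 X2 D2 R2 G2 X3 D3 R3 G3 H :: "'a::{ring,monoid_mult}"
  assumes hh: "H + H = 1"
 and r0: "X2 * X1 = - (X1 * X2)"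
 and r1: "X2 * D1 = - (D1 * X2)"
 and r2: "D2 * X1 = - (X1 * D2)"
 and r3: "D2 * D1 = - (D1 * D2)"
 and r4: "R2 * X1 = X1 * R2"
 and r5: "X2 * R1 = R1 * X2"
 and r6: "R2 * D1 = D1 * R2"
 and r7: "D2 * R1 = R1 * D2"
 and r8: "R2 * R1 = R1 * R2"
 and r9: "G2 * G1 = G1 * G2"
 and r10: "X3 * X1 = - (X1 * X3)"
 and r11: "X3 * D1 = - (D1 * X3)"
 and r12: "D3 * X1 = - (X1 * D3)"
 and r13: "D3 * D1 = - (D1 * D3)"
 and r14: "R3 * X1 = X1 * R3"
 and r15: "X3 * R1 = R1 * X3"
 and r16: "R3 * D1 = D1 * R3"
 and r17: "D3 * R1 = R1 * D3"
 and r18: "R3 * R1 = R1 * R3"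
 and r19: "G3 * G1 = G1 * G3"
 and r20: "R1 * R1 = 1"
 and r21: "R1 * X1 = - (X1 * R1)"
 and r22: "R1 * D1 = - (D1 * R1)"
 and r23: "D1 * X1 = X1 * D1 - (G1 * R1) - (G1 * R1) - (1)"
 and r24: "X1 * G1 = G1 * X1"
 and r25: "D1 * G1 = G1 * D1"
 and r26: "R1 * G1 = G1 * R1"
 and r27: "X2 * G1 = G1 * X2"
 and r28: "D2 * G1 = G1 * D2"
 and r29: "R2 * G1 = G1 * R2"
 and r30: "X3 * G1 = G1 * X3"
 and r31: "D3 * G1 = G1 * D3"
 and r32: "R3 * G1 = G1 * R3"
 and r33: "X1 * H = H * X1"
 and r34: "D1 * H = H * D1"
 and r35: "R1 * H = H * R1"
 and r36: "G1 * H = H * G1"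
 and r37: "X3 * X2 = - (X2 * X3)"
 and r38: "X3 * D2 = - (D2 * X3)"
 and r39: "D3 * X2 = - (X2 * D3)"
 and r40: "D3 * D2 = - (D2 * D3)"
 and r41: "R3 * X2 = X2 * R3"
 and r42: "X3 * R2 = R2 * X3"
 and r43: "R3 * D2 = D2 * R3"
 and r44: "D3 * R2 = R2 * D3"
 and r45: "R3 * R2 = R2 * R3"
 and r46: "G3 * G2 = G2 * G3"
 and r47: "R2 * R2 = 1"
 and r48: "R2 * X2 = - (X2 * R2)"
 and r49: "R2 * D2 = - (D2 * R2)"
 and r50: "D2 * X2 = X2 * D2 - (G2 * R2) - (G2 * R2) - (1)"
 and r51: "X1 * G2 = G2 * X1"
 and r52: "D1 * G2 = G2 * D1"
 and r53: "R1 * G2 = G2 * R1"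
 and r54: "X2 * G2 = G2 * X2"
 and r55: "D2 * G2 = G2 * D2"
 and r56: "R2 * G2 = G2 * R2"
 and r57: "X3 * G2 = G2 * X3"
 and r58: "D3 * G2 = G2 * D3"
 and r59: "R3 * G2 = G2 * R3"
 and r60: "X2 * H = H * X2"
 and r61: "D2 * H = H * D2"
 and r62: "R2 * H = H * R2"
 and r63: "G2 * H = H * G2"
 and r64: "R3 * R3 = 1"
 and r65: "R3 * X3 = - (X3 * R3)"
 and r66: "R3 * D3 = - (D3 * R3)"
 and r67: "D3 * X3 = X3 * D3 - (G3 * R3) - (G3 * R3) - (1)"
 and r68: "X1 * G3 = G3 * X1"
 and r69: "D1 * G3 = G3 * D1"
 and r70: "R1 * G3 = G3 * R1"
 and r71: "X2 * G3 = G3 * X2"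
 and r72: "D2 * G3 = G3 * D2"
 and r73: "R2 * G3 = G3 * R2"
 and r74: "X3 * G3 = G3 * X3"
 and r75: "D3 * G3 = G3 * D3"
 and r76: "R3 * G3 = G3 * R3"
 and r77: "X3 * H = H * X3"
 and r78: "D3 * H = H * D3"
 and r79: "R3 * H = H * R3"
 and r80: "G3 * H = H * G3"
begin
lemma z0: "X2 * (X1 * z) = - (X1 * (X2 * z))"
  by (simp only: mult.assoc[symmetric] r0 ; simp add: algebra_simps)
lemma z1: "X2 * (D1 * z) = - (D1 * (X2 * z))"
  by (simp only: mult.assoc[symmetric] r1 ; simp add: algebra_simps)
lemma z2: "D2 * (X1 * z) = - (X1 * (D2 * z))"
  by (simp only: mult.assoc[symmetric] r2 ; simp add: algebra_simps)
lemma z3: "D2 * (D1 * z) = - (D1 * (D2 * z))"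
  by (simp only: mult.assoc[symmetric] r3 ; simp add: algebra_simps)
lemma z4: "R2 * (X1 * z) = X1 * (R2 * z)"
  by (simp only: mult.assoc[symmetric] r4 ; simp add: algebra_simps)
lemma z5: "X2 * (R1 * z) = R1 * (X2 * z)"
  by (simp only: mult.assoc[symmetric] r5 ; simp add: algebra_simps)
lemma z6: "R2 * (D1 * z) = D1 * (R2 * z)"
  by (simp only: mult.assoc[symmetric] r6 ; simp add: algebra_simps)
lemma z7: "D2 * (R1 * z) = R1 * (D2 * z)"
  by (simp only: mult.assoc[symmetric] r7 ; simp add: algebra_simps)
lemma z8: "R2 * (R1 * z) = R1 * (R2 * z)"
  by (simp only: mult.assoc[symmetric] r8 ; simp add: algebra_simps)
lemma z9: "G2 * (G1 * z) = G1 * (G2 * z)"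
  by (simp only: mult.assoc[symmetric] r9 ; simp add: algebra_simps)
lemma z10: "X3 * (X1 * z) = - (X1 * (X3 * z))"
  by (simp only: mult.assoc[symmetric] r10 ; simp add: algebra_simps)
lemma z11: "X3 * (D1 * z) = - (D1 * (X3 * z))"
  by (simp only: mult.assoc[symmetric] r11 ; simp add: algebra_simps)
lemma z12: "D3 * (X1 * z) = - (X1 * (D3 * z))"
  by (simp only: mult.assoc[symmetric] r12 ; simp add: algebra_simps)
lemma z13: "D3 * (D1 * z) = - (D1 * (D3 * z))"
  by (simp only: mult.assoc[symmetric] r13 ; simp add: algebra_simps)
lemma z14: "R3 * (X1 * z) = X1 * (R3 * z)"
  by (simp only: mult.assoc[symmetric] r14 ; simp add: algebra_simps)
lemma z15: "X3 * (R1 * z) = R1 * (X3 * z)"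
  by (simp only: mult.assoc[symmetric] r15 ; simp add: algebra_simps)
lemma z16: "R3 * (D1 * z) = D1 * (R3 * z)"
  by (simp only: mult.assoc[symmetric] r16 ; simp add: algebra_simps)
lemma z17: "D3 * (R1 * z) = R1 * (D3 * z)"
  by (simp only: mult.assoc[symmetric] r17 ; simp add: algebra_simps)
lemma z18: "R3 * (R1 * z) = R1 * (R3 * z)"
  by (simp only: mult.assoc[symmetric] r18 ; simp add: algebra_simps)
lemma z19: "G3 * (G1 * z) = G1 * (G3 * z)"
  by (simp only: mult.assoc[symmetric] r19 ; simp add: algebra_simps)
lemma z20: "R1 * (R1 * z) = z"
  by (simp only: mult.assoc[symmetric] r20 ; simp add: algebra_simps)
lemma z21: "R1 * (X1 * z) = - (X1 * (R1 * z))"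
  by (simp only: mult.assoc[symmetric] r21 ; simp add: algebra_simps)
lemma z22: "R1 * (D1 * z) = - (D1 * (R1 * z))"
  by (simp only: mult.assoc[symmetric] r22 ; simp add: algebra_simps)
lemma z23: "D1 * (X1 * z) = X1 * (D1 * z) - (G1 * (R1 * z)) - (G1 * (R1 * z)) - (z)"
  by (simp only: mult.assoc[symmetric] r23 ; simp add: algebra_simps)
lemma z24: "X1 * (G1 * z) = G1 * (X1 * z)"
  by (simp only: mult.assoc[symmetric] r24 ; simp add: algebra_simps)
lemma z25: "D1 * (G1 * z) = G1 * (D1 * z)"
  by (simp only: mult.assoc[symmetric] r25 ; simp add: algebra_simps)
lemma z26: "R1 * (G1 * z) = G1 * (R1 * z)"
  by (simp only: mult.assoc[symmetric] r26 ; simp add: algebra_simps)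
lemma z27: "X2 * (G1 * z) = G1 * (X2 * z)"
  by (simp only: mult.assoc[symmetric] r27 ; simp add: algebra_simps)
lemma z28: "D2 * (G1 * z) = G1 * (D2 * z)"
  by (simp only: mult.assoc[symmetric] r28 ; simp add: algebra_simps)
lemma z29: "R2 * (G1 * z) = G1 * (R2 * z)"
  by (simp only: mult.assoc[symmetric] r29 ; simp add: algebra_simps)
lemma z30: "X3 * (G1 * z) = G1 * (X3 * z)"
  by (simp only: mult.assoc[symmetric] r30 ; simp add: algebra_simps)
lemma z31: "D3 * (G1 * z) = G1 * (D3 * z)"
  by (simp only: mult.assoc[symmetric] r31 ; simp add: algebra_simps)
lemma z32: "R3 * (G1 * z) = G1 * (R3 * z)"
  by (simp only: mult.assoc[symmetric] r32 ; simp add: algebra_simps)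
lemma z33: "X1 * (H * z) = H * (X1 * z)"
  by (simp only: mult.assoc[symmetric] r33 ; simp add: algebra_simps)
lemma z34: "D1 * (H * z) = H * (D1 * z)"
  by (simp only: mult.assoc[symmetric] r34 ; simp add: algebra_simps)
lemma z35: "R1 * (H * z) = H * (R1 * z)"
  by (simp only: mult.assoc[symmetric] r35 ; simp add: algebra_simps)
lemma z36: "G1 * (H * z) = H * (G1 * z)"
  by (simp only: mult.assoc[symmetric] r36 ; simp add: algebra_simps)
lemma z37: "X3 * (X2 * z) = - (X2 * (X3 * z))"
  by (simp only: mult.assoc[symmetric] r37 ; simp add: algebra_simps)
lemma z38: "X3 * (D2 * z) = - (D2 * (X3 * z))"
  by (simp only: mult.assoc[symmetric] r38 ; simp add: algebra_simps)
lemma z39: "D3 * (X2 * z) = - (X2 * (D3 * z))"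
  by (simp only: mult.assoc[symmetric] r39 ; simp add: algebra_simps)
lemma z40: "D3 * (D2 * z) = - (D2 * (D3 * z))"
  by (simp only: mult.assoc[symmetric] r40 ; simp add: algebra_simps)
lemma z41: "R3 * (X2 * z) = X2 * (R3 * z)"
  by (simp only: mult.assoc[symmetric] r41 ; simp add: algebra_simps)
lemma z42: "X3 * (R2 * z) = R2 * (X3 * z)"
  by (simp only: mult.assoc[symmetric] r42 ; simp add: algebra_simps)
lemma z43: "R3 * (D2 * z) = D2 * (R3 * z)"
  by (simp only: mult.assoc[symmetric] r43 ; simp add: algebra_simps)
lemma z44: "D3 * (R2 * z) = R2 * (D3 * z)"
  by (simp only: mult.assoc[symmetric] r44 ; simp add: algebra_simps)
lemma z45: "R3 * (R2 * z) = R2 * (R3 * z)"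
  by (simp only: mult.assoc[symmetric] r45 ; simp add: algebra_simps)
lemma z46: "G3 * (G2 * z) = G2 * (G3 * z)"
  by (simp only: mult.assoc[symmetric] r46 ; simp add: algebra_simps)
lemma z47: "R2 * (R2 * z) = z"
  by (simp only: mult.assoc[symmetric] r47 ; simp add: algebra_simps)
lemma z48: "R2 * (X2 * z) = - (X2 * (R2 * z))"
  by (simp only: mult.assoc[symmetric] r48 ; simp add: algebra_simps)
lemma z49: "R2 * (D2 * z) = - (D2 * (R2 * z))"
  by (simp only: mult.assoc[symmetric] r49 ; simp add: algebra_simps)
lemma z50: "D2 * (X2 * z) = X2 * (D2 * z) - (G2 * (R2 * z)) - (G2 * (R2 * z)) - (z)"
  by (simp only: mult.assoc[symmetric] r50 ; simp add: algebra_simps)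
lemma z51: "X1 * (G2 * z) = G2 * (X1 * z)"
  by (simp only: mult.assoc[symmetric] r51 ; simp add: algebra_simps)
lemma z52: "D1 * (G2 * z) = G2 * (D1 * z)"
  by (simp only: mult.assoc[symmetric] r52 ; simp add: algebra_simps)
lemma z53: "R1 * (G2 * z) = G2 * (R1 * z)"
  by (simp only: mult.assoc[symmetric] r53 ; simp add: algebra_simps)
lemma z54: "X2 * (G2 * z) = G2 * (X2 * z)"
  by (simp only: mult.assoc[symmetric] r54 ; simp add: algebra_simps)
lemma z55: "D2 * (G2 * z) = G2 * (D2 * z)"
  by (simp only: mult.assoc[symmetric] r55 ; simp add: algebra_simps)
lemma z56: "R2 * (G2 * z) = G2 * (R2 * z)"
  by (simp only: mult.assoc[symmetric] r56 ; simp add: algebra_simps)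
lemma z57: "X3 * (G2 * z) = G2 * (X3 * z)"
  by (simp only: mult.assoc[symmetric] r57 ; simp add: algebra_simps)
lemma z58: "D3 * (G2 * z) = G2 * (D3 * z)"
  by (simp only: mult.assoc[symmetric] r58 ; simp add: algebra_simps)
lemma z59: "R3 * (G2 * z) = G2 * (R3 * z)"
  by (simp only: mult.assoc[symmetric] r59 ; simp add: algebra_simps)
lemma z60: "X2 * (H * z) = H * (X2 * z)"
  by (simp only: mult.assoc[symmetric] r60 ; simp add: algebra_simps)
lemma z61: "D2 * (H * z) = H * (D2 * z)"
  by (simp only: mult.assoc[symmetric] r61 ; simp add: algebra_simps)
lemma z62: "R2 * (H * z) = H * (R2 * z)"
  by (simp only: mult.assoc[symmetric] r62 ; simp add: algebra_simps)
lemma z63: "G2 * (H * z) = H * (G2 * z)"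
  by (simp only: mult.assoc[symmetric] r63 ; simp add: algebra_simps)
lemma z64: "R3 * (R3 * z) = z"
  by (simp only: mult.assoc[symmetric] r64 ; simp add: algebra_simps)
lemma z65: "R3 * (X3 * z) = - (X3 * (R3 * z))"
  by (simp only: mult.assoc[symmetric] r65 ; simp add: algebra_simps)
lemma z66: "R3 * (D3 * z) = - (D3 * (R3 * z))"
  by (simp only: mult.assoc[symmetric] r66 ; simp add: algebra_simps)
lemma z67: "D3 * (X3 * z) = X3 * (D3 * z) - (G3 * (R3 * z)) - (G3 * (R3 * z)) - (z)"
  by (simp only: mult.assoc[symmetric] r67 ; simp add: algebra_simps)
lemma z68: "X1 * (G3 * z) = G3 * (X1 * z)"
  by (simp only: mult.assoc[symmetric] r68 ; simp add: algebra_simps)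
lemma z69: "D1 * (G3 * z) = G3 * (D1 * z)"
  by (simp only: mult.assoc[symmetric] r69 ; simp add: algebra_simps)
lemma z70: "R1 * (G3 * z) = G3 * (R1 * z)"
  by (simp only: mult.assoc[symmetric] r70 ; simp add: algebra_simps)
lemma z71: "X2 * (G3 * z) = G3 * (X2 * z)"
  by (simp only: mult.assoc[symmetric] r71 ; simp add: algebra_simps)
lemma z72: "D2 * (G3 * z) = G3 * (D2 * z)"
  by (simp only: mult.assoc[symmetric] r72 ; simp add: algebra_simps)
lemma z73: "R2 * (G3 * z) = G3 * (R2 * z)"
  by (simp only: mult.assoc[symmetric] r73 ; simp add: algebra_simps)
lemma z74: "X3 * (G3 * z) = G3 * (X3 * z)"
  by (simp only: mult.assoc[symmetric] r74 ; simp add: algebra_simps)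
lemma z75: "D3 * (G3 * z) = G3 * (D3 * z)"
  by (simp only: mult.assoc[symmetric] r75 ; simp add: algebra_simps)
lemma z76: "R3 * (G3 * z) = G3 * (R3 * z)"
  by (simp only: mult.assoc[symmetric] r76 ; simp add: algebra_simps)
lemma z77: "X3 * (H * z) = H * (X3 * z)"
  by (simp only: mult.assoc[symmetric] r77 ; simp add: algebra_simps)
lemma z78: "D3 * (H * z) = H * (D3 * z)"
  by (simp only: mult.assoc[symmetric] r78 ; simp add: algebra_simps)
lemma z79: "R3 * (H * z) = H * (R3 * z)"
  by (simp only: mult.assoc[symmetric] r79 ; simp add: algebra_simps)
lemma z80: "G3 * (H * z) = H * (G3 * z)"
  by (simp only: mult.assoc[symmetric] r80 ; simp add: algebra_simps)
lemma hz: "H * x + H * x = x" by (metis distrib_right hh mult_1_left)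
lemma hz2: "H * x + (H * x + y) = x + y" by (metis add.assoc hz)
lemmas nf = r0 z0 r1 z1 r2 z2 r3 z3 r4 z4 r5 z5 r6 z6 r7 z7 r8 z8 r9 z9 r10 z10 r11 z11 r12 z12 r13 z13 r14 z14 r15 z15 r16 z16 r17 z17 r18 z18 r19 z19 r20 z20 r21 z21 r22 z22 r23 z23 r24 z24 r25 z25 r26 z26 r27 z27 r28 z28 r29 z29 r30 z30 r31 z31 r32 z32 r33 z33 r34 z34 r35 z35 r36 z36 r37 z37 r38 z38 r39 z39 r40 z40 r41 z41 r42 z42 r43 z43 r44 z44 r45 z45 r46 z46 r47 z47 r48 z48 r49 z49 r50 z50 r51 z51 r52 z52 r53 z53 r54 z54 r55 z55 r56 z56 r57 z57 r58 z58 r59 z59 r60 z60 r61 z61 r62 z62 r63 z63 r64 z64 r65 z65 r66 z66 r67 z67 r68 z68 r69 z69 r70 z70 r71 z71 r72 z72 r73 z73 r74 z74 r75 z75 r76 z76 r77 z77 r78 z78 r79 z79 r80 z80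
definition "gm x d r = H * (x*d - d*x - 1) * r"
definition "g12 = gm (X1+X2) (D1+D2) (R1*R2)"
definition "g23 = gm (X2+X3) (D2+D3) (R2*R3)"
definition "g13 = gm (X1+X3) (D1+D3) (R1*R3)"
definition "g123 = gm (X1+X2+X3) (D1+D2+D3) (R1*R2*R3)"
lemmas gdefs = g12_def g23_def g13_def g123_def gm_def
lemma Qc12: "g123 * g12 = g12 * g123"
  unfolding gdefs by (simp add: nf algebra_simps hh hz hz2 diff_eq_eq eq_diff_eq)
lemma Qc23: "g123 * g23 = g23 * g123"
  unfolding gdefs by (simp add: nf algebra_simps hh hz hz2 diff_eq_eq eq_diff_eq)
lemma Qc13: "g123 * g13 = g13 * g123"
  unfolding gdefs by (simp add: nf algebra_simps hh hz hz2 diff_eq_eq eq_diff_eq)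
lemma Ga: "(g12 - H) * (g23 + g13) + (g23 + g13) * (g12 - H) = (G3 + g123) * (G1 + G2) + (G3 + g123) * (G1 + G2)"
  unfolding gdefs by (simp add: nf algebra_simps hh hz hz2 diff_eq_eq eq_diff_eq)
lemma Gb: "(g12 + H) * (g23 - g13) + (g23 - g13) * (g12 + H) = (G3 - g123) * (G1 - G2) + (G3 - g123) * (G1 - G2)"
  unfolding gdefs by (simp add: nf algebra_simps hh hz hz2 diff_eq_eq eq_diff_eq)
lemma Ya: "(g23 + g13) * (g23 + g13) + g12 * g12 + H * H = g123 * g123 + G1*G1 + G2*G2 + G3*G3 + g12 + (G1*G2 + G3*g123) + (G1*G2 + G3*g123)"
  unfolding gdefs by (simp add: nf algebra_simps hh hz hz2 diff_eq_eq eq_diff_eq)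
lemma Yb: "(g23 - g13) * (g23 - g13) + g12 * g12 + H * H + g12 + (G1*G2 + G3*g123) + (G1*G2 + G3*g123) = g123 * g123 + G1*G1 + G2*G2 + G3*G3"
  unfolding gdefs by (simp add: nf algebra_simps hh hz hz2 diff_eq_eq eq_diff_eq)
lemma C1Y: "((G3 + g123) * (G1 + G2)) * (g23 + g13) = (g23 + g13) * ((G3 + g123) * (G1 + G2))"
  unfolding gdefs by (simp add: nf algebra_simps hh hz hz2 diff_eq_eq eq_diff_eq)
lemma C1P: "((G3 + g123) * (G1 + G2)) * (g12 - H) = (g12 - H) * ((G3 + g123) * (G1 + G2))"
  unfolding gdefs by (simp add: nf algebra_simps hh hz hz2 diff_eq_eq eq_diff_eq)
lemma C2Y: "((G3 - g123) * (G1 - G2)) * (g23 - g13) = (g23 - g13) * ((G3 - g123) * (G1 - G2))"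
  unfolding gdefs by (simp add: nf algebra_simps hh hz hz2 diff_eq_eq eq_diff_eq)
lemma C2P: "((G3 - g123) * (G1 - G2)) * (g12 + H) = (g12 + H) * ((G3 - g123) * (G1 - G2))"
  unfolding gdefs by (simp add: nf algebra_simps hh hz hz2 diff_eq_eq eq_diff_eq)
lemma cp1: "G1 * H = H * G1" by (simp add: nf)
lemma cp2: "G2 * H = H * G2" by (simp add: nf)
lemma cp3: "G3 * H = H * G3" by (simp add: nf)
lemma cp4: "G2 * G1 = G1 * G2" by (simp add: nf)
lemma cp5: "G3 * G1 = G1 * G3" by (simp add: nf)
lemma cp6: "G3 * G2 = G2 * G3" by (simp add: nf)
lemma cp7: "g123 * H = H * g123" unfolding gdefs by (simp add: nf algebra_simps hh hz hz2 diff_eq_eq eq_diff_eq)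
lemma cp8: "g123 * G1 = G1 * g123" unfolding gdefs by (simp add: nf algebra_simps hh hz hz2 diff_eq_eq eq_diff_eq)
lemma cp9: "g123 * G2 = G2 * g123" unfolding gdefs by (simp add: nf algebra_simps hh hz hz2 diff_eq_eq eq_diff_eq)
lemma cp10: "g123 * G3 = G3 * g123" unfolding gdefs by (simp add: nf algebra_simps hh hz hz2 diff_eq_eq eq_diff_eq)
lemma cp11: "g12 * H = H * g12" unfolding gdefs by (simp add: nf algebra_simps hh hz hz2 diff_eq_eq eq_diff_eq)
lemma cp12: "g12 * G1 = G1 * g12" unfolding gdefs by (simp add: nf algebra_simps hh hz hz2 diff_eq_eq eq_diff_eq)
lemma cp13: "g12 * G2 = G2 * g12" unfolding gdefs by (simp add: nf algebra_simps hh hz hz2 diff_eq_eq eq_diff_eq)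
lemma cp14: "g12 * G3 = G3 * g12" unfolding gdefs by (simp add: nf algebra_simps hh hz hz2 diff_eq_eq eq_diff_eq)
lemma cp15: "g12 * g123 = g123 * g12" using Qc12 by simp

lemma finA: "((g23 + g13) * (g12 - H) - (G3 + g123) * (G1 + G2)) * ((g23 + g13) * (g12 - H) - (G3 + g123) * (G1 + G2))
  = (g123 - g12 + G3 + H) * (g123 + g12 + G3 - H) * (G1 - g12 + G2 + H) * (G1 + g12 + G2 - H)"
proof -
  interpret c: comm6 H G1 G2 G3 g123 g12
    by unfold_locales (rule hh cp1 cp2 cp3 cp4 cp5 cp6 cp7 cp8 cp9 cp10 cp11 cp12 cp13 cp14 cp15)+
  have k: "((g23 + g13) * (g12 - H) - (G3 + g123) * (G1 + G2)) * ((g23 + g13) * (g12 - H) - (G3 + g123) * (G1 + G2))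
     = (G3 + g123) * (G1 + G2) * ((G3 + g123) * (G1 + G2)) - (g23 + g13) * (g23 + g13) * ((g12 - H) * (g12 - H))"
    by (rule kk_alg[OF Ga C1Y C1P])
  have y: "(g23 + g13) * (g23 + g13) = g123 * g123 + G1*G1 + G2*G2 + G3*G3 + g12 + (G1*G2 + G3*g123) + (G1*G2 + G3*g123) - g12 * g12 - H * H"
    using Ya by (simp add: algebra_simps)
  show ?thesis unfolding k y using c.fin1 by (simp add: add.assoc)
qed

lemma finB: "((g23 - g13) * (g12 + H) - (G3 - g123) * (G1 - G2)) * ((g23 - g13) * (g12 + H) - (G3 - g123) * (G1 - G2))
  = (g123 - g12 - G3 - H) * (g123 + g12 - G3 + H) * (G1 - g12 - G2 - H) * (G1 + g12 - G2 + H)"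
proof -
  interpret c: comm6 H G1 G2 G3 g123 g12
    by unfold_locales (rule hh cp1 cp2 cp3 cp4 cp5 cp6 cp7 cp8 cp9 cp10 cp11 cp12 cp13 cp14 cp15)+
  have k: "((g23 - g13) * (g12 + H) - (G3 - g123) * (G1 - G2)) * ((g23 - g13) * (g12 + H) - (G3 - g123) * (G1 - G2))
     = (G3 - g123) * (G1 - G2) * ((G3 - g123) * (G1 - G2)) - (g23 - g13) * (g23 - g13) * ((g12 + H) * (g12 + H))"
    by (rule kk_alg[OF Gb C2Y C2P])
  have y: "(g23 - g13) * (g23 - g13) = g123 * g123 + G1*G1 + G2*G2 + G3*G3 - g12 - (G1*G2 + G3*g123) - (G1*G2 + G3*g123) - g12 * g12 - H * H"
    using Yb by (simp add: algebra_simps)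
  show ?thesis unfolding k y using c.fin2 by (simp add: add.assoc)
qed
end


lemma gblk_comm:
  fixes X D R H Y :: "'a::{ring,monoid_mult}"
  assumes "Y*X = X*Y" "Y*D = D*Y" "Y*R = R*Y" "Y*H = H*Y"
  shows "Y * (H*(X*D - D*X - 1)*R) = (H*(X*D - D*X - 1)*R) * Y"
proof -
  have a: "Y*(X*D) = (X*D)*Y" using assms(1,2) by (metis mult.assoc)
  have b: "Y*(D*X) = (D*X)*Y" using assms(1,2) by (metis mult.assoc)
  have c: "Y * (X*D - D*X - 1) = (X*D - D*X - 1) * Y" by (simp add: right_diff_distrib left_diff_distrib a b)
  have "Y * (H*(X*D - D*X - 1)*R) = (Y*H)*(X*D - D*X - 1)*R" by (simp add: mult.assoc)
  also have "\<dots> = H*(Y*(X*D - D*X - 1))*R" using assms(4) by (simp add: mult.assoc)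
  also have "\<dots> = H*(X*D - D*X - 1)*(Y*R)" using c by (simp add: mult.assoc)
  also have "\<dots> = (H*(X*D - D*X - 1)*R) * Y" using assms(3) by (simp add: mult.assoc)
  finally show ?thesis .
qed

definition blockok :: "(nat \<Rightarrow> real) \<Rightarrow> (nat \<Rightarrow> 'v::real_normed_vector \<Rightarrow> 'v) \<Rightarrow> nat set \<Rightarrow> bool" where
  "blockok mu e A \<longleftrightarrow> GA mu e A * XA e A = XA e A * GA mu e A \<and> GA mu e A * DA mu e A = DA mu e A * GA mu e A"

context
  fixes n :: nat and e :: "nat \<Rightarrow> 'v::real_normed_vector \<Rightarrow> 'v" and mu :: "nat \<Rightarrow> real"
  assumes cl: "clifford_module n e"
begin

lemma pXX: "P \<subseteq> {1..n} \<Longrightarrow> Q \<subseteq> {1..n} \<Longrightarrow> P \<inter> Q = {} \<Longrightarrow> XA e Q * XA e P = - (XA e P * XA e Q)"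
  by (rule blk_XX[OF cl]) auto
lemma pXD: "P \<subseteq> {1..n} \<Longrightarrow> Q \<subseteq> {1..n} \<Longrightarrow> P \<inter> Q = {} \<Longrightarrow> XA e Q * DA mu e P = - (DA mu e P * XA e Q)"
  by (rule blk_XD[OF cl]) auto
lemma pDX: "P \<subseteq> {1..n} \<Longrightarrow> Q \<subseteq> {1..n} \<Longrightarrow> P \<inter> Q = {} \<Longrightarrow> DA mu e Q * XA e P = - (XA e P * DA mu e Q)"
  by (rule blk_DX[OF cl]) auto
lemma pDD: "P \<subseteq> {1..n} \<Longrightarrow> Q \<subseteq> {1..n} \<Longrightarrow> P \<inter> Q = {} \<Longrightarrow> DA mu e Q * DA mu e P = - (DA mu e P * DA mu e Q)"
  by (rule blk_DD[OF cl]) auto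
lemma pRX: "P \<subseteq> {1..n} \<Longrightarrow> Q \<subseteq> {1..n} \<Longrightarrow> P \<inter> Q = {} \<Longrightarrow> Rf Q * XA e P = XA e P * Rf Q"
  by (rule blk_RX_out[OF cl]) auto
lemma pXR: "P \<subseteq> {1..n} \<Longrightarrow> Q \<subseteq> {1..n} \<Longrightarrow> P \<inter> Q = {} \<Longrightarrow> XA e Q * Rf P = Rf P * XA e Q"
  by (rule sym, rule blk_RX_out[OF cl]) auto
lemma pRD: "P \<subseteq> {1..n} \<Longrightarrow> Q \<subseteq> {1..n} \<Longrightarrow> P \<inter> Q = {} \<Longrightarrow> Rf Q * DA mu e P = DA mu e P * Rf Q"
  by (rule blk_RD_out[OF cl]) auto
lemma pDR: "P \<subseteq> {1..n} \<Longrightarrow> Q \<subseteq> {1..n} \<Longrightarrow> P \<inter> Q = {} \<Longrightarrow> DA mu e Q * Rf P = Rf P * DA mu e Q"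
  by (rule sym, rule blk_RD_out[OF cl]) auto
lemma pRR: "Rf Q * Rf P = Rf P * (Rf Q :: 'v opr)"
  by (simp add: Rf_Rf Un_commute)

lemma sRR: "Rf P * Rf P = (1 :: 'v opr)"
  by (simp add: Rf_Rf Rf_empty)
lemma sRX: "P \<subseteq> {1..n} \<Longrightarrow> Rf P * XA e P = - (XA e P * Rf P)"
  by (rule blk_RX_in[OF cl])
lemma sRD: "P \<subseteq> {1..n} \<Longrightarrow> Rf P * DA mu e P = - (DA mu e P * Rf P)"
  by (rule blk_RD_in[OF cl])
lemma s13: "DA mu e P * XA e P = XA e P * DA mu e P - GA mu e P * Rf P - GA mu e P * Rf P - 1"
  unfolding GA_def by (rule gblk_r13[OF sRR Hh_hh])
lemma sXG: "blockok mu e P \<Longrightarrow> XA e P * GA mu e P = GA mu e P * XA e P"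
  by (simp add: blockok_def)
lemma sDG: "blockok mu e P \<Longrightarrow> DA mu e P * GA mu e P = GA mu e P * DA mu e P"
  by (simp add: blockok_def)
lemma sRG: "P \<subseteq> {1..n} \<Longrightarrow> Rf P * GA mu e P = GA mu e P * Rf P"
  unfolding GA_def by (rule gblk_R[OF sRX sRD Hh_comm[symmetric]])
lemma sXH: "XA e P * Hh = Hh * XA e P" by (rule Hh_comm[symmetric])
lemma sDH: "DA mu e P * Hh = Hh * DA mu e P" by (rule Hh_comm[symmetric])
lemma sRH: "Rf P * Hh = Hh * (Rf P :: 'v opr)" by (rule Hh_comm[symmetric])
lemma sGH: "GA mu e P * Hh = Hh * GA mu e P" by (rule Hh_comm[symmetric])

lemma cXG: assumes h: "P \<subseteq> {1..n}" "Q \<subseteq> {1..n}" "P \<inter> Q = {}"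
  shows "XA e Q * GA mu e P = GA mu e P * XA e Q"
  unfolding GA_def by (rule gblk_other[OF pXX[OF h] pXD[OF h] pXR[OF h] Hh_comm[symmetric]])
lemma cDG: assumes h: "P \<subseteq> {1..n}" "Q \<subseteq> {1..n}" "P \<inter> Q = {}"
  shows "DA mu e Q * GA mu e P = GA mu e P * DA mu e Q"
  unfolding GA_def by (rule gblk_other[OF pDX[OF h] pDD[OF h] pDR[OF h] Hh_comm[symmetric]])
lemma cRG: assumes h: "P \<subseteq> {1..n}" "Q \<subseteq> {1..n}" "P \<inter> Q = {}"
  shows "Rf Q * GA mu e P = GA mu e P * Rf Q"
  unfolding GA_def by (rule gblk_comm[OF pRX[OF h] pRD[OF h] pRR Hh_comm[symmetric]])
lemma cGG: assumes h: "P \<subseteq> {1..n}" "Q \<subseteq> {1..n}" "P \<inter> Q = {}"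
  shows "GA mu e Q * GA mu e P = GA mu e P * GA mu e Q"
proof -
  have h': "Q \<subseteq> {1..n}" "P \<subseteq> {1..n}" "Q \<inter> P = {}" using h by auto
  show ?thesis unfolding GA_def[of mu e P]
    by (rule gblk_comm[OF cXG[OF h', symmetric] cDG[OF h', symmetric] cRG[OF h', symmetric] sGH])
qed

lemma single_ok: "k \<in> {1..n} \<Longrightarrow> blockok mu e {k}"
  by (simp add: blockok_def base_G[OF cl] sc_left)

end


context
  fixes n :: nat and e :: "nat \<Rightarrow> 'v::real_normed_vector \<Rightarrow> 'v" and mu :: "nat \<Rightarrow> real"
  assumes cl: "clifford_module n e"
begin

lemma Rf_union: "A \<inter> B = {} \<Longrightarrow> Rf A * Rf B = Rf (A \<union> B)"
  by (simp add: Rf_Rf) (metis Diff_triv Int_commute)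

lemma blk_ind: "1 \<le> l \<Longrightarrow> l \<le> n \<Longrightarrow> blockok mu e {1..l}"
proof (induction l rule: nat_induct_at_least)
  case base
  then show ?case using single_ok[OF cl, of 1 mu] by simp
next
  case (Suc l)
  let ?A = "{1..l}" and ?B = "{Suc l}"
  have hA: "?A \<subseteq> {1..n}" using Suc by auto
  have hB: "?B \<subseteq> {1..n}" using Suc by auto
  have hAB: "?A \<inter> ?B = {}" by auto
  have hBA: "?B \<inter> ?A = {}" by auto
  have okA: "blockok mu e ?A" using Suc by simp
  have okB: "blockok mu e ?B" using Suc by (intro single_ok[OF cl]) auto
  interpret d: duo "XA e ?A" "DA mu e ?A" "Rf ?A" "GA mu e ?A" "XA e ?B" "DA mu e ?B" "Rf ?B" "GA mu e ?B" Hh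
    by unfold_locales
      (rule Hh_hh pXX[OF cl hA hB hAB] pXD[OF cl hA hB hAB] pDX[OF cl hA hB hAB] pDD[OF cl hA hB hAB]
         pRX[OF cl hA hB hAB] pXR[OF cl hA hB hAB] pRD[OF cl hA hB hAB] pDR[OF cl hA hB hAB] pRR[OF cl]
         cGG[OF cl hA hB hAB] sRR[OF cl] sRX[OF cl hA] sRD[OF cl hA] s13[OF cl] sXG[OF cl okA] sDG[OF cl okA] sRG[OF cl hA]
         cXG[OF cl hA hB hAB] cDG[OF cl hA hB hAB] cRG[OF cl hA hB hAB] sXH[OF cl] sDH[OF cl] sRH[OF cl] sGH[OF cl]
         sRX[OF cl hB] sRD[OF cl hB] sXG[OF cl okB] sDG[OF cl okB] sRG[OF cl hB]
         cXG[OF cl hB hA hBA] cDG[OF cl hB hA hBA] cRG[OF cl hB hA hBA])+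
  have U: "{1..Suc l} = ?A \<union> ?B" using Suc by auto
  have X: "XA e {1..Suc l} = XA e ?A + XA e ?B" unfolding U by (rule XA_union[OF cl hA hB hAB])
  have D: "DA mu e {1..Suc l} = DA mu e ?A + DA mu e ?B" unfolding U by (rule DA_union[OF cl hA hB hAB])
  have R: "Rf {1..Suc l} = Rf ?A * Rf ?B" unfolding U by (rule Rf_union[symmetric, OF hAB])
  have G: "GA mu e {1..Suc l} = d.gm (XA e ?A + XA e ?B) (DA mu e ?A + DA mu e ?B) (Rf ?A * Rf ?B)"
    by (simp only: GA_def d.gm_def X D R)
  show ?case unfolding blockok_def G X D using d.uX d.uD by simp
qed

end


definition corr :: "('v::real_normed_vector) oper \<Rightarrow> 'v opr \<Rightarrow> bool" where
  "corr P p \<longleftrightarrow> (\<forall>g\<in>PA. P g = rep p g)"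

lemma corr_plus: "corr P p \<Longrightarrow> corr Q q \<Longrightarrow> corr (op_plus P Q) (p + q)"
  by (simp add: corr_def op_plus_def)
lemma corr_minus: "corr P p \<Longrightarrow> corr Q q \<Longrightarrow> corr (op_minus P Q) (p - q)"
  by (simp add: corr_def op_minus_def)
lemma corr_smul: "corr P p \<Longrightarrow> corr (op_smul c P) (sc c * p)"
  by (simp add: corr_def op_smul_def rep_sc)
lemma corr_const: "corr (op_const c) (sc c)"
  by (simp add: corr_def op_const_def rep_sc)
lemma corr_comp: "corr P p \<Longrightarrow> corr Q q \<Longrightarrow> corr (P \<circ> Q) (p * q)"
  by (simp add: corr_def)
lemma corr_Gam: "clifford_module n e \<Longrightarrow> A \<subseteq> {1..n} \<Longrightarrow> corr (Gam mu e A) (GA mu e A)"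
  by (simp add: corr_def rep_GA)

lemma union_GA:
  assumes cl: "clifford_module n e" and h: "P \<subseteq> {1..n}" "Q \<subseteq> {1..n}" "P \<inter> Q = {}"
  shows "GA mu e (P \<union> Q) = Hh * ((XA e P + XA e Q) * (DA mu e P + DA mu e Q) - (DA mu e P + DA mu e Q) * (XA e P + XA e Q) - 1) * (Rf P * Rf Q)"
  by (simp only: GA_def XA_union[OF cl h] DA_union[OF cl h] Rf_union[OF cl h(3)])

lemma sc_half: "sc (1/2) = Hh" by (simp add: Hh_def)
lemma sc_mhalf: "sc (- 1 / 2) = - Hh"
proof -
  have "(- 1 / 2 :: real) = - (1/2)" by simp
  then show ?thesis by (simp only: sc_neg Hh_def)
qed
lemma sc_mhalf2: "sc (- (1 / 2)) = - Hh" by (simp only: sc_neg Hh_def)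
lemma sc_m1: "sc (- 1) = - 1" by (simp only: sc_neg sc_1)

theorem proposition10:
  fixes n l :: nat and mu :: "nat \<Rightarrow> real" and e :: "nat \<Rightarrow> 'v::real_normed_vector \<Rightarrow> 'v"
    and s :: real and f :: "'v fn"
  assumes "n \<ge> 3" and "l \<in> {1..n-2}"
    and "\<forall>i\<in>{1..n}. mu i > 0"
    and "clifford_module n e"
    and "s \<in> {1, -1}"
    and "f \<in> polyV n"
  shows "(Kop mu e s l \<circ> Kop mu e s l) f =
     (op_plus (op_plus (op_minus (Gam mu e {1..l+2}) (Gam mu e {1..l+1})) (op_smul s (Gam mu e {l+2}))) (op_const (s / 2))
      \<circ> op_plus (op_plus (op_plus (Gam mu e {1..l+2}) (Gam mu e {1..l+1})) (op_smul s (Gam mu e {l+2}))) (op_const (- s / 2))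
      \<circ> op_plus (op_plus (op_minus (Gam mu e {1..l}) (Gam mu e {1..l+1})) (op_smul s (Gam mu e {l+1}))) (op_const (s / 2))
      \<circ> op_plus (op_plus (op_plus (Gam mu e {1..l}) (Gam mu e {1..l+1})) (op_smul s (Gam mu e {l+1}))) (op_const (- s / 2))) f"
proof -
  note cl = assms(4)
  have l1: "1 \<le> l" and l2: "l + 2 \<le> n" using assms(1,2) by auto
  let ?A = "{1..l}" and ?B = "{l+1}" and ?C = "{l+2}"
  have hA: "?A \<subseteq> {1..n}" and hB: "?B \<subseteq> {1..n}" and hC: "?C \<subseteq> {1..n}" using l1 l2 by auto
  have hAB: "?A \<inter> ?B = {}" and hBA: "?B \<inter> ?A = {}" and hAC: "?A \<inter> ?C = {}" and hCA: "?C \<inter> ?A = {}"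
    and hBC: "?B \<inter> ?C = {}" and hCB: "?C \<inter> ?B = {}" by auto
  have okA: "blockok mu e ?A" using l1 l2 by (intro blk_ind[OF cl]) auto
  have okB: "blockok mu e ?B" using l1 l2 by (intro single_ok[OF cl]) auto
  have okC: "blockok mu e ?C" using l1 l2 by (intro single_ok[OF cl]) auto
  interpret t: tri "XA e ?A" "DA mu e ?A" "Rf ?A" "GA mu e ?A" "XA e ?B" "DA mu e ?B" "Rf ?B" "GA mu e ?B"
    "XA e ?C" "DA mu e ?C" "Rf ?C" "GA mu e ?C" Hh
    by unfold_locales
      (rule Hh_hh pRR[OF cl] sRR[OF cl] s13[OF cl] sXH[OF cl] sDH[OF cl] sRH[OF cl] sGH[OF cl]
         pXX[OF cl hA hB hAB] pXD[OF cl hA hB hAB] pDX[OF cl hA hB hAB] pDD[OF cl hA hB hAB]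
         pRX[OF cl hA hB hAB] pXR[OF cl hA hB hAB] pRD[OF cl hA hB hAB] pDR[OF cl hA hB hAB]
         pXX[OF cl hA hC hAC] pXD[OF cl hA hC hAC] pDX[OF cl hA hC hAC] pDD[OF cl hA hC hAC]
         pRX[OF cl hA hC hAC] pXR[OF cl hA hC hAC] pRD[OF cl hA hC hAC] pDR[OF cl hA hC hAC]
         pXX[OF cl hB hC hBC] pXD[OF cl hB hC hBC] pDX[OF cl hB hC hBC] pDD[OF cl hB hC hBC]
         pRX[OF cl hB hC hBC] pXR[OF cl hB hC hBC] pRD[OF cl hB hC hBC] pDR[OF cl hB hC hBC]
         cGG[OF cl hA hB hAB] cGG[OF cl hA hC hAC] cGG[OF cl hB hC hBC]
         sRX[OF cl hA] sRD[OF cl hA] sXG[OF cl okA] sDG[OF cl okA] sRG[OF cl hA]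
         sRX[OF cl hB] sRD[OF cl hB] sXG[OF cl okB] sDG[OF cl okB] sRG[OF cl hB]
         sRX[OF cl hC] sRD[OF cl hC] sXG[OF cl okC] sDG[OF cl okC] sRG[OF cl hC]
         cXG[OF cl hA hB hAB] cDG[OF cl hA hB hAB] cRG[OF cl hA hB hAB]
         cXG[OF cl hB hA hBA] cDG[OF cl hB hA hBA] cRG[OF cl hB hA hBA]
         cXG[OF cl hA hC hAC] cDG[OF cl hA hC hAC] cRG[OF cl hA hC hAC]
         cXG[OF cl hC hA hCA] cDG[OF cl hC hA hCA] cRG[OF cl hC hA hCA]
         cXG[OF cl hB hC hBC] cDG[OF cl hB hC hBC] cRG[OF cl hB hC hBC]
         cXG[OF cl hC hB hCB] cDG[OF cl hC hB hCB] cRG[OF cl hC hB hCB])+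
  have e12: "{1..l+1} = ?A \<union> ?B" by auto
  have e23: "{l+1, l+2} = ?B \<union> ?C" by auto
  have e13: "{1..l+2} - {l+1} = ?A \<union> ?C" by auto
  have e123: "{1..l+2} = (?A \<union> ?B) \<union> ?C" by auto
  have hAB': "?A \<union> ?B \<subseteq> {1..n}" and hABC: "(?A \<union> ?B) \<inter> ?C = {}" using hA hB by auto
  have g12: "GA mu e {1..l+1} = t.g12"
    unfolding e12 t.g12_def t.gm_def by (rule union_GA[OF cl hA hB hAB])
  have g23: "GA mu e {l+1, l+2} = t.g23"
    unfolding e23 t.g23_def t.gm_def by (rule union_GA[OF cl hB hC hBC])
  have g13: "GA mu e ({1..l+2} - {l+1}) = t.g13"
    unfolding e13 t.g13_def t.gm_def by (rule union_GA[OF cl hA hC hAC])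
  have g123: "GA mu e {1..l+2} = t.g123"
    unfolding e123 t.g123_def t.gm_def union_GA[OF cl hAB' hC hABC]
    by (simp only: XA_union[OF cl hA hB hAB] DA_union[OF cl hA hB hAB] Rf_union[OF cl hAB])
  let ?K = "(GA mu e {l+1, l+2} + sc s * GA mu e ({1..l+2} - {l+1})) * (GA mu e {1..l+1} + sc (- s / 2))
     - (GA mu e {l+2} + sc s * GA mu e {1..l+2}) * (GA mu e {1..l} + sc s * GA mu e {l+1})"
  let ?F = "(GA mu e {1..l+2} - GA mu e {1..l+1} + sc s * GA mu e {l+2} + sc (s / 2))
      * (GA mu e {1..l+2} + GA mu e {1..l+1} + sc s * GA mu e {l+2} + sc (- s / 2))
      * (GA mu e {1..l} - GA mu e {1..l+1} + sc s * GA mu e {l+1} + sc (s / 2))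
      * (GA mu e {1..l} + GA mu e {1..l+1} + sc s * GA mu e {l+1} + sc (- s / 2))"
  have sub: "{l+1, l+2} \<subseteq> {1..n}" "{1..l+2} - {l+1} \<subseteq> {1..n}" "{1..l+1} \<subseteq> {1..n}"
     "{l+2} \<subseteq> {1..n}" "{1..l+2} \<subseteq> {1..n}" "{1..l} \<subseteq> {1..n}" "{l+1} \<subseteq> {1..n}"
    using l1 l2 by auto
  have cK: "corr (Kop mu e s l) ?K"
    unfolding Kop_def
    by (intro corr_minus corr_comp corr_plus corr_smul corr_const corr_Gam[OF cl] sub)
  have cF: "corr (op_plus (op_plus (op_minus (Gam mu e {1..l+2}) (Gam mu e {1..l+1})) (op_smul s (Gam mu e {l+2}))) (op_const (s / 2))
      \<circ> op_plus (op_plus (op_plus (Gam mu e {1..l+2}) (Gam mu e {1..l+1})) (op_smul s (Gam mu e {l+2}))) (op_const (- s / 2))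
      \<circ> op_plus (op_plus (op_minus (Gam mu e {1..l}) (Gam mu e {1..l+1})) (op_smul s (Gam mu e {l+1}))) (op_const (s / 2))
      \<circ> op_plus (op_plus (op_plus (Gam mu e {1..l}) (Gam mu e {1..l+1})) (op_smul s (Gam mu e {l+1}))) (op_const (- s / 2))) ?F"
    by (intro corr_minus corr_comp corr_plus corr_smul corr_const corr_Gam[OF cl] sub)
  have KF: "?K * ?K = ?F"
  proof -
    from assms(5) consider "s = 1" | "s = -1" by auto
    then show ?thesis
    proof cases
      case 1
      show ?thesis using t.finA unfolding 1 g12 g23 g13 g123
        by (simp add: sc_1 sc_half sc_mhalf sc_mhalf2)
    next
      case 2
      show ?thesis using t.finB unfolding 2 g12 g23 g13 g123
        by (simp add: sc_m1 sc_half sc_mhalf sc_mhalf2)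
    qed
  qed
  have fPA: "f \<in> PA" using assms(6) by (rule PA_I)
  have k1: "Kop mu e s l f = rep ?K f" using cK fPA unfolding corr_def by blast
  have k2: "Kop mu e s l (rep ?K f) = rep ?K (rep ?K f)" using cK rep_PA unfolding corr_def by blast
  have "(Kop mu e s l \<circ> Kop mu e s l) f = rep ?K (rep ?K f)"
    by (simp only: comp_apply k1 k2)
  also have "\<dots> = rep (?K * ?K) f" by (simp only: rep_times)
  also have "\<dots> = rep ?F f" by (simp only: KF)
  also have "\<dots> = (op_plus (op_plus (op_minus (Gam mu e {1..l+2}) (Gam mu e {1..l+1})) (op_smul s (Gam mu e {l+2}))) (op_const (s / 2))
      \<circ> op_plus (op_plus (op_plus (Gam mu e {1..l+2}) (Gam mu e {1..l+1})) (op_smul s (Gam mu e {l+2}))) (op_const (- s / 2))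
      \<circ> op_plus (op_plus (op_minus (Gam mu e {1..l}) (Gam mu e {1..l+1})) (op_smul s (Gam mu e {l+1}))) (op_const (s / 2))
      \<circ> op_plus (op_plus (op_plus (Gam mu e {1..l}) (Gam mu e {1..l+1})) (op_smul s (Gam mu e {l+1}))) (op_const (- s / 2))) f"
    using cF fPA unfolding corr_def by (metis (no_types, lifting))
  finally show ?thesis .
qed


end
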